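(* Assume the setting below. For every $i\in\mathbb{N}$ let $Y_i,Y_i'\subseteq X_i\setminus\{o\}$ be non-empty disjoint subsets, let $\mathcal{Y}=\prod_{i\ge1}Y_i$, $\mathcal{Y}'=\prod_{i\ge1}Y_i'$ (with the product topology of the discrete finite sets), and let $m_j$ denote the maximal order of an element of $A_j$. Suppose that for every $n\in\mathbb{N}$ there is some $j$ with \[|Y_j|\,|Y_j'|>n\,m_j\,(|Y_j|+|Y_j'|).\] Then the set of shrinking pairs $(\alpha,\beta)$ is dense in $\mathcal{Y}\times\mathcal{Y}'$.
   Context: Setting: $Q,G$ are groups and $X=(X_n)_{n\in\mathbb{N}}$ is a sequence of finite sets with $|X_n|\ge2$, each with actions of $Q$ and $G$; $Q_n,G_n\subseteq\mathrm{Sym}(X_n)$ are the images and $A_n=\langle Q_n,G_n\rangle$. Assume for all $n$: (A1) $G,Q$ finitely generated; (A2) $Q$ perfect; (A3) $A_n$ is transitive on $X_n$ and generated by the $G_n$-conjugates of $Q_n$. $\mathcal{T}_j$ is the rooted tree of finite words $x_j\cdots x_k$ ($x_i\in X_i$), $\mathrm{Aut}(\mathcal{T}_j)$ its root-fixing automorphisms; sections $h|_u\in\mathrm{Aut}(\mathcal{T}_{j+\ell})$ (for $u$ of level $\ell$) are defined by $h(uv)=h(u)h|_u(v)$. $A_j$ acts by rooted automorphisms $a\cdot x_jx_{j+1}\cdots x_k=(ax_j)x_{j+1}\cdots x_k$ and is identified with its image; $q_j,g_j$ denote images of $q\in Q,g\in G$ in $A_j$. A point $o\in X_i$ is fixed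 in each $X_i$; $\mathcal{S}=\prod_{i\ge1}(X_i\setminus\{o\})$. For $\alpha\in\mathcal{S}$, $q\in Q$, $\tilde q^\alpha_{[j]}\in\mathrm{Aut}(\mathcal{T}_j)$ acts trivially on the first level with section at $x\in X_j$ equal to $\tilde q^\alpha_{[j+1]}$ if $x=o$, $q_{j+1}$ if $x=\alpha_j$, identity otherwise; analogously $\tilde g^\beta_{[j]}$ for $\beta\in\mathcal{S}$, $g\in G$. $\tilde Q^\alpha_{[j]},\tilde G^\beta_{[j]}$ are the sets of these elements, $\Gamma_j^{\alpha,\beta}=\langle A_j,\tilde Q^\alpha_{[j]},\tilde G^\beta_{[j]}\rangle$, and $\tilde B^{\alpha,\beta}_j=\tilde Q^\alpha_{[j]}\tilde G^\beta_{[j]}$. Stabilized sections: for $g\in\mathrm{Aut}(\mathcal{T}_j)$ and a vertex $u$, $\ell_u(g)$ is the length of the orbit of $u$ under $\langle g\rangle$ and $g\Vert_u=g^{\ell_u(g)}|_u$. A pair $(\alpha,\beta)\in\mathcal{S}^2$ is shrinking if $\alpha_j\ne\beta_j$ for all $j$ and for each $\gamma\in\Gamma_1^{\alpha,\beta}$ there is $k\in\mathbb{N}$ such that for every vertex $x$ of level $k$ of $\mathcal{T}_1$, $\gamma\Vert_x$ lies in $\tilde B^{\alpha,\beta}_{k+1}$ or in $A_{k+1}$. *)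

theory Defs
  imports "HOL-Analysis.Analysis" "HOL-Algebra.Group_Action" "HOL-Algebra.Multiplicative_Group"
    "HOL-Algebra.Generated_Groups"
begin

(* Levels are indexed by positive naturals n \<ge> 1; X n is the alphabet at level n.
   A vertex of the tree T_j is a word x_j x_{j+1} ... x_k, represented as a list whose
   i-th entry (0-based) lies in X (j+i). *)
definition wordT :: "(nat \<Rightarrow> 'x set) \<Rightarrow> nat \<Rightarrow> 'x list \<Rightarrow> bool" where
  "wordT X j w \<longleftrightarrow> (\<forall>i<length w. w ! i \<in> X (j + i))"

(* Rooted (root-fixing) automorphisms of T_j, normalised to be the identity on non-words. *)
definition Aut :: "(nat \<Rightarrow> 'x set) \<Rightarrow> nat \<Rightarrow> ('x list \<Rightarrow> 'x list) set" where
  "Aut X j = {h. (\<forall>w. wordT X j w \<longrightarrow> wordT X j (h w) \<and> length (h w) = length w)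
              \<and> (\<forall>u v. wordT X j (u @ v) \<longrightarrow> take (length u) (h (u @ v)) = h u)
              \<and> bij_betw h {w. wordT X j w} {w. wordT X j w}
              \<and> (\<forall>w. \<not> wordT X j w \<longrightarrow> h w = w)}"

definition autgrp :: "(nat \<Rightarrow> 'x set) \<Rightarrow> nat \<Rightarrow> ('x list \<Rightarrow> 'x list) monoid" where
  "autgrp X j = \<lparr>carrier = Aut X j, mult = (\<circ>), one = id\<rparr>"

(* Section h|_u \<in> Aut(T_{j+|u|}):  h(uv) = h(u) h|_u(v) *)
definition sect :: "(nat \<Rightarrow> 'x set) \<Rightarrow> nat \<Rightarrow> ('x list \<Rightarrow> 'x list) \<Rightarrow> 'x list \<Rightarrow> ('x list \<Rightarrow> 'x list)" where
  "sect X j h u = (\<lambda>v. if wordT X (j + length u) v then drop (length u) (h (u @ v)) else v)"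

definition orblen :: "('x list \<Rightarrow> 'x list) \<Rightarrow> 'x list \<Rightarrow> nat" where
  "orblen h u = (LEAST n. 0 < n \<and> (h ^^ n) u = u)"

definition stsect :: "(nat \<Rightarrow> 'x set) \<Rightarrow> nat \<Rightarrow> ('x list \<Rightarrow> 'x list) \<Rightarrow> 'x list \<Rightarrow> ('x list \<Rightarrow> 'x list)" where
  "stsect X j h u = sect X j (h ^^ orblen h u) u"

definition Agrp :: "(nat \<Rightarrow> 'x set) \<Rightarrow> (nat \<Rightarrow> 'q \<Rightarrow> 'x \<Rightarrow> 'x) \<Rightarrow> (nat \<Rightarrow> 'g \<Rightarrow> 'x \<Rightarrow> 'x)
    \<Rightarrow> ('q, 'c) monoid_scheme \<Rightarrow> ('g, 'd) monoid_scheme \<Rightarrow> nat \<Rightarrow> ('x \<Rightarrow> 'x) set" where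
  "Agrp X actQ actG Q G n = generate (BijGroup (X n)) (actQ n ` carrier Q \<union> actG n ` carrier G)"

definition maxord :: "(nat \<Rightarrow> 'x set) \<Rightarrow> (nat \<Rightarrow> 'q \<Rightarrow> 'x \<Rightarrow> 'x) \<Rightarrow> (nat \<Rightarrow> 'g \<Rightarrow> 'x \<Rightarrow> 'x)
    \<Rightarrow> ('q, 'c) monoid_scheme \<Rightarrow> ('g, 'd) monoid_scheme \<Rightarrow> nat \<Rightarrow> nat" where
  "maxord X actQ actG Q G j = Max (group.ord (BijGroup (X j)) ` Agrp X actQ actG Q G j)"

definition embA :: "(nat \<Rightarrow> 'x set) \<Rightarrow> nat \<Rightarrow> ('x \<Rightarrow> 'x) \<Rightarrow> 'x list \<Rightarrow> 'x list" where
  "embA X j a w = (if wordT X j w \<and> w \<noteq> [] then a (hd w) # tl w else w)"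

(* recursive description of  \<tilde>q^\<alpha>_[j]  where f n is the image q_n of q in A_n:
   trivial on the first level; section at ox is \<tilde>q^\<alpha>_[j+1], at \<alpha>_j it is q_{j+1},
   identity elsewhere *)
fun tilraw :: "(nat \<Rightarrow> 'x \<Rightarrow> 'x) \<Rightarrow> (nat \<Rightarrow> 'x) \<Rightarrow> (nat \<Rightarrow> 'x) \<Rightarrow> nat \<Rightarrow> 'x list \<Rightarrow> 'x list" where
  "tilraw f ox \<alpha> j [] = []"
| "tilraw f ox \<alpha> j (x # w) =
     (if x = ox j then x # tilraw f ox \<alpha> (Suc j) w
      else if x = \<alpha> j then x # (case w of [] \<Rightarrow> [] | y # w' \<Rightarrow> f (Suc j) y # w')
      else x # w)"

definition til :: "(nat \<Rightarrow> 'x set) \<Rightarrow> nat \<Rightarrow> (nat \<Rightarrow> 'x \<Rightarrow> 'x) \<Rightarrow> (nat \<Rightarrow> 'x) \<Rightarrow> (nat \<Rightarrow> 'x)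
    \<Rightarrow> 'x list \<Rightarrow> 'x list" where
  "til X j f ox \<alpha> = (\<lambda>w. if wordT X j w then tilraw f ox \<alpha> j w else w)"

definition Til :: "(nat \<Rightarrow> 'x set) \<Rightarrow> (nat \<Rightarrow> 'q \<Rightarrow> 'x \<Rightarrow> 'x) \<Rightarrow> ('q, 'c) monoid_scheme
    \<Rightarrow> (nat \<Rightarrow> 'x) \<Rightarrow> (nat \<Rightarrow> 'x) \<Rightarrow> nat \<Rightarrow> ('x list \<Rightarrow> 'x list) set" where
  "Til X act Q ox \<alpha> j = {til X j (\<lambda>n. act n q) ox \<alpha> | q. q \<in> carrier Q}"

definition Btil :: "(nat \<Rightarrow> 'x set) \<Rightarrow> (nat \<Rightarrow> 'q \<Rightarrow> 'x \<Rightarrow> 'x) \<Rightarrow> (nat \<Rightarrow> 'g \<Rightarrow> 'x \<Rightarrow> 'x)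
    \<Rightarrow> ('q, 'c) monoid_scheme \<Rightarrow> ('g, 'd) monoid_scheme \<Rightarrow> (nat \<Rightarrow> 'x)
    \<Rightarrow> (nat \<Rightarrow> 'x) \<Rightarrow> (nat \<Rightarrow> 'x) \<Rightarrow> nat \<Rightarrow> ('x list \<Rightarrow> 'x list) set" where
  "Btil X actQ actG Q G ox \<alpha> \<beta> j =
     {a \<circ> b | a b. a \<in> Til X actQ Q ox \<alpha> j \<and> b \<in> Til X actG G ox \<beta> j}"

definition Gam :: "(nat \<Rightarrow> 'x set) \<Rightarrow> (nat \<Rightarrow> 'q \<Rightarrow> 'x \<Rightarrow> 'x) \<Rightarrow> (nat \<Rightarrow> 'g \<Rightarrow> 'x \<Rightarrow> 'x)
    \<Rightarrow> ('q, 'c) monoid_scheme \<Rightarrow> ('g, 'd) monoid_scheme \<Rightarrow> (nat \<Rightarrow> 'x)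
    \<Rightarrow> (nat \<Rightarrow> 'x) \<Rightarrow> (nat \<Rightarrow> 'x) \<Rightarrow> nat \<Rightarrow> ('x list \<Rightarrow> 'x list) set" where
  "Gam X actQ actG Q G ox \<alpha> \<beta> j =
     generate (autgrp X j) (embA X j ` Agrp X actQ actG Q G j
                             \<union> Til X actQ Q ox \<alpha> j \<union> Til X actG G ox \<beta> j)"

definition inS :: "(nat \<Rightarrow> 'x set) \<Rightarrow> (nat \<Rightarrow> 'x) \<Rightarrow> (nat \<Rightarrow> 'x) \<Rightarrow> bool" where
  "inS X ox \<alpha> \<longleftrightarrow> (\<forall>i\<ge>1. \<alpha> i \<in> X i - {ox i})"

definition shrinking :: "(nat \<Rightarrow> 'x set) \<Rightarrow> (nat \<Rightarrow> 'q \<Rightarrow> 'x \<Rightarrow> 'x) \<Rightarrow> (nat \<Rightarrow> 'g \<Rightarrow> 'x \<Rightarrow> 'x)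
    \<Rightarrow> ('q, 'c) monoid_scheme \<Rightarrow> ('g, 'd) monoid_scheme \<Rightarrow> (nat \<Rightarrow> 'x)
    \<Rightarrow> (nat \<Rightarrow> 'x) \<Rightarrow> (nat \<Rightarrow> 'x) \<Rightarrow> bool" where
  "shrinking X actQ actG Q G ox \<alpha> \<beta> \<longleftrightarrow>
     inS X ox \<alpha> \<and> inS X ox \<beta> \<and> (\<forall>j\<ge>1. \<alpha> j \<noteq> \<beta> j) \<and>
     (\<forall>\<gamma> \<in> Gam X actQ actG Q G ox \<alpha> \<beta> 1. \<exists>k\<ge>1. \<forall>x. wordT X 1 x \<and> length x = k \<longrightarrow>
         stsect X 1 \<gamma> x \<in> Btil X actQ actG Q G ox \<alpha> \<beta> (k + 1)
                            \<union> embA X (k + 1) ` Agrp X actQ actG Q G (k + 1))"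

end

theory Submission imports Defs begin

lemma wordT_Nil[simp]: "wordT X j []" by (simp add: wordT_def)

lemma wordT_Cons[simp]: "wordT X j (x # w) \<longleftrightarrow> x \<in> X j \<and> wordT X (Suc j) w"
  unfolding wordT_def by (auto simp: less_Suc_eq_0_disj)

lemma wordT_append: "wordT X j (u @ v) \<longleftrightarrow> wordT X j u \<and> wordT X (j + length u) v"
  by (induction u arbitrary: j) auto

lemma AutD:
  assumes "h \<in> Aut X j"
  shows "wordT X j w \<Longrightarrow> wordT X j (h w)" "wordT X j w \<Longrightarrow> length (h w) = length w"
    "wordT X j (u@v) \<Longrightarrow> take (length u) (h (u@v)) = h u"
    "bij_betw h {w. wordT X j w} {w. wordT X j w}"
    "\<not> wordT X j w \<Longrightarrow> h w = w"
  using assms unfolding Aut_def by auto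

lemma Aut_app: "h \<in> Aut X j \<Longrightarrow> wordT X j (u@v) \<Longrightarrow> h (u@v) = h u @ drop (length u) (h (u@v))"
  by (metis AutD(3) append_take_drop_id)

lemma Aut_inj: assumes "h \<in> Aut X j" shows "inj h"
proof (rule injI)
  fix a b assume e: "h a = h b"
  have bi: "inj_on h {w. wordT X j w}" using AutD(4)[OF assms] bij_betw_def by blast
  show "a = b"
  proof (cases "wordT X j a"; cases "wordT X j b")
    assume "wordT X j a" "wordT X j b" thus ?thesis using bi e by (auto dest: inj_onD)
  next
    assume "wordT X j a" "\<not> wordT X j b" thus ?thesis using e AutD[OF assms] by metis
  next
    assume "\<not> wordT X j a" "wordT X j b" thus ?thesis using e AutD[OF assms] by metis
  next
    assume "\<not> wordT X j a" "\<not> wordT X j b" thus ?thesis using e AutD[OF assms] by metis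
  qed
qed

lemma id_Aut: "id \<in> Aut X j"
  unfolding Aut_def by (auto simp: bij_betw_id)

lemma Aut_comp: assumes h: "h \<in> Aut X j" and h': "h' \<in> Aut X j" shows "h \<circ> h' \<in> Aut X j"
proof -
  have tk: "take (length u) (h (h' (u @ v))) = h (h' u)" if w: "wordT X j (u @ v)" for u v
  proof -
    have "h' (u @ v) = h' u @ drop (length u) (h' (u @ v))" using Aut_app[OF h' w] .
    moreover have "length (h' u) = length u" using AutD(2)[OF h'] w wordT_append by blast
    moreover have "wordT X j (h' (u @ v))" using AutD(1)[OF h' w] .
    ultimately show ?thesis using AutD(3)[OF h] by metis
  qed
  show ?thesis unfolding Aut_def
    using AutD[OF h] AutD[OF h'] tk by (auto intro: bij_betw_trans)
qed

lemma AutI: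
  assumes "\<And>w. wordT X j w \<Longrightarrow> wordT X j (h w) \<and> length (h w) = length w"
    "\<And>u v. wordT X j (u @ v) \<Longrightarrow> take (length u) (h (u @ v)) = h u"
    "\<And>w. wordT X j w \<Longrightarrow> wordT X j (g w)"
    "\<And>w. wordT X j w \<Longrightarrow> h (g w) = w" "\<And>w. wordT X j w \<Longrightarrow> g (h w) = w"
    "\<And>w. \<not> wordT X j w \<Longrightarrow> h w = w"
  shows "h \<in> Aut X j"
  unfolding Aut_def using assms by (auto intro!: bij_betw_byWitness[where f'=g])

lemma foldr_comp_append: "foldr (\<circ>) (xs @ ys) id = foldr (\<circ>) xs id \<circ> foldr (\<circ>) ys id"
  by (induction xs) auto

lemma foldr_Aut: "set M \<subseteq> Aut X j \<Longrightarrow> foldr (\<circ>) M id \<in> Aut X j"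
  by (induction M) (auto intro: Aut_comp id_Aut)

lemma funpow_foldr: "(foldr (\<circ>) M id) ^^ n = foldr (\<circ>) (concat (replicate n M)) id"
proof (induction n)
  case (Suc n)
  have "(foldr (\<circ>) M id) ^^ Suc n = foldr (\<circ>) M id \<circ> (foldr (\<circ>) M id) ^^ n" by simp
  also have "\<dots> = foldr (\<circ>) (concat (replicate (Suc n) M)) id"
    by (simp only: Suc.IH replicate_Suc concat.simps foldr_comp_append)
  finally show ?case .
qed simp

lemma embA_Nil[simp]: "embA X j a [] = []" by (simp add: embA_def)
lemma embA_Cons[simp]: "embA X j a (x # w) = (if x \<in> X j \<and> wordT X (Suc j) w then a x # w else x # w)"
  by (simp add: embA_def)

lemma embA_Aut: assumes "a \<in> Bij (X j)" shows "embA X j a \<in> Aut X j"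
proof -
  have bij: "bij_betw a (X j) (X j)" using assms by (simp add: Bij_def)
  let ?g = "embA X j (inv_into (X j) a)"
  show ?thesis
  proof (rule AutI[where g="?g"])
    fix w assume "wordT X j w" thus "wordT X j (embA X j a w) \<and> length (embA X j a w) = length w"
      using bij by (cases w) (auto dest: bij_betwE)
  next
    fix u v assume "wordT X j (u @ v)" thus "take (length u) (embA X j a (u @ v)) = embA X j a u"
      by (cases u) (auto simp: wordT_append)
  next
    fix w assume "wordT X j w" thus "wordT X j (?g w)"
      using bij by (cases w) (auto simp: bij_betw_def inv_into_into)
  next
    fix w assume "wordT X j w" thus "embA X j a (?g w) = w"
      using bij by (cases w) (auto simp: bij_betw_def inv_into_into f_inv_into_f)
  next
    fix w assume "wordT X j w" thus "?g (embA X j a w) = w"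
      using bij by (cases w) (auto simp: bij_betw_def inv_into_f_f dest: bij_betwE)
  next
    fix w assume "\<not> wordT X j w" thus "embA X j a w = w" by (simp add: embA_def)
  qed
qed

definition osq :: "(nat \<Rightarrow> 'x) \<Rightarrow> nat \<Rightarrow> nat \<Rightarrow> 'x list" where
  "osq ox j k = map ox [j..<j+k]"

lemma osq_0[simp]: "osq ox j 0 = []" by (simp add: osq_def)
lemma osq_Suc: "osq ox j (Suc k) = ox j # osq ox (Suc j) k"
  by (simp add: osq_def upt_rec)
lemma length_osq[simp]: "length (osq ox j k) = k" by (simp add: osq_def)
lemma osq_snoc: "osq ox j (Suc k) = osq ox j k @ [ox (j + k)]" by (simp add: osq_def)
lemma osq_word: "(\<And>i. i \<ge> j \<Longrightarrow> ox i \<in> X i) \<Longrightarrow> wordT X j (osq ox j k)"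
  by (induction k arbitrary: j) (auto simp: osq_Suc)

lemma tilraw_hd: "tilraw f ox \<alpha> j (x # w) = x # tl (tilraw f ox \<alpha> j (x # w))"
  by (auto split: list.splits)

lemma tilraw_word:
  assumes "\<And>n x. n > j \<Longrightarrow> x \<in> X n \<Longrightarrow> f n x \<in> X n" "wordT X j w"
  shows "wordT X j (tilraw f ox \<alpha> j w) \<and> length (tilraw f ox \<alpha> j w) = length w"
  using assms
proof (induction w arbitrary: j)
  case (Cons x w)
  show ?case
  proof (cases "x = ox j")
    case True thus ?thesis using Cons.prems Cons.IH[of "Suc j"] by auto
  next
    case False thus ?thesis using Cons.prems by (auto split: list.splits)
  qed
qed simp

lemma tilraw_comp:
  assumes "\<And>n x. n > j \<Longrightarrow> x \<in> X n \<Longrightarrow> f' n x \<in> X n" "wordT X j w"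
  shows "tilraw f ox \<alpha> j (tilraw f' ox \<alpha> j w) = tilraw (\<lambda>n x. f n (f' n x)) ox \<alpha> j w"
  using assms
proof (induction w arbitrary: j)
  case (Cons x w)
  show ?case
  proof (cases "x = ox j")
    case True thus ?thesis using Cons.prems Cons.IH[of "Suc j"] by auto
  next
    case False thus ?thesis using Cons.prems by (auto split: list.splits)
  qed
qed simp

lemma tilraw_cong:
  assumes "\<And>n x. n > j \<Longrightarrow> x \<in> X n \<Longrightarrow> f n x = f' n x" "wordT X j w"
  shows "tilraw f ox \<alpha> j w = tilraw f' ox \<alpha> j w"
  using assms
proof (induction w arbitrary: j)
  case (Cons x w)
  show ?case
  proof (cases "x = ox j")
    case True thus ?thesis using Cons.prems Cons.IH[of "Suc j"] by auto
  next
    case False thus ?thesis using Cons.prems by (auto split: list.splits)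
  qed
qed simp

lemma tilraw_idf:
  assumes "\<And>n x. n > j \<Longrightarrow> x \<in> X n \<Longrightarrow> f n x = x" "wordT X j w"
  shows "tilraw f ox \<alpha> j w = w"
  using assms
proof (induction w arbitrary: j)
  case (Cons x w)
  show ?case
  proof (cases "x = ox j")
    case True thus ?thesis using Cons.prems Cons.IH[of "Suc j"] by auto
  next
    case False thus ?thesis using Cons.prems by (auto split: list.splits)
  qed
qed simp

lemma tilraw_take: "take (length u) (tilraw f ox \<alpha> j (u @ v)) = tilraw f ox \<alpha> j u"
proof (induction u arbitrary: j)
  case (Cons x u)
  show ?case
  proof (cases "x = ox j")
    case True thus ?thesis using Cons.IH[of "Suc j"] by auto
  next
    case False thus ?thesis by (auto split: list.splits simp: Cons_eq_append_conv)
  qed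
qed simp

lemma tilraw_commute:
  assumes "\<And>i. i \<ge> j \<Longrightarrow> \<alpha> i \<noteq> \<beta> i"
  shows "tilraw f ox \<alpha> j (tilraw g ox \<beta> j w) = tilraw g ox \<beta> j (tilraw f ox \<alpha> j w)"
  using assms
proof (induction w arbitrary: j)
  case (Cons x w)
  show ?case
  proof (cases "x = ox j")
    case True thus ?thesis using Cons.prems Cons.IH[of "Suc j"] by auto
  next
    case False thus ?thesis using Cons.prems[of j] by (auto split: list.splits)
  qed
qed simp

lemma tilraw_dep:
  assumes "\<And>i. j \<le> i \<Longrightarrow> Suc i < j + length w \<Longrightarrow> \<alpha> i = \<alpha>' i"
  shows "tilraw f ox \<alpha> j w = tilraw f ox \<alpha>' j w"
  using assms
proof (induction w arbitrary: j)
  case (Cons x w)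
  show ?case
  proof (cases "x = ox j")
    case True thus ?thesis using Cons.prems Cons.IH[of "Suc j"] by auto
  next
    case False
    show ?thesis
    proof (cases w)
      case Nil thus ?thesis using False by auto
    next
      case (Cons y w')
      thus ?thesis using False Cons.prems[of j] by auto
    qed
  qed
qed simp

lemma tilraw_sect:
  "drop (length v) (tilraw f ox \<alpha> j (v @ w)) =
     (if v = osq ox j (length v) then tilraw f ox \<alpha> (j + length v) w
      else if v \<noteq> [] \<and> v = osq ox j (length v - 1) @ [\<alpha> (j + length v - 1)]
        then (case w of [] \<Rightarrow> [] | y # w' \<Rightarrow> f (j + length v) y # w')
      else w)"
proof (induction v arbitrary: j)
  case Nil thus ?case by simp
next
  case (Cons x v)
  show ?case
  proof (cases "x = ox j")
    case True
    have e1: "(x # v = osq ox j (length (x # v))) = (v = osq ox (Suc j) (length v))"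
      using True by (simp add: osq_Suc)
    have e2: "(x # v \<noteq> [] \<and> x # v = osq ox j (length (x # v) - 1) @ [\<alpha> (j + length (x # v) - 1)])
       = (v \<noteq> [] \<and> v = osq ox (Suc j) (length v - 1) @ [\<alpha> (Suc j + length v - 1)])"
      if "x # v \<noteq> osq ox j (length (x # v))"
    proof (cases v)
      case Nil thus ?thesis using that True by (simp add: osq_Suc)
    next
      case (Cons y v')
      thus ?thesis using True by (simp add: osq_Suc)
    qed
    have "drop (length (x # v)) (tilraw f ox \<alpha> j ((x # v) @ w)) = drop (length v) (tilraw f ox \<alpha> (Suc j) (v @ w))"
      using True by simp
    also have "\<dots> = (if v = osq ox (Suc j) (length v) then tilraw f ox \<alpha> (Suc j + length v) w
      else if v \<noteq> [] \<and> v = osq ox (Suc j) (length v - 1) @ [\<alpha> (Suc j + length v - 1)]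
        then (case w of [] \<Rightarrow> [] | y # w' \<Rightarrow> f (Suc j + length v) y # w')
      else w)" by (rule Cons.IH)
    moreover have jj: "j + length (x # v) = Suc j + length v" by simp
    ultimately have L: "drop (length (x # v)) (tilraw f ox \<alpha> j ((x # v) @ w)) = (if v = osq ox (Suc j) (length v) then tilraw f ox \<alpha> (Suc j + length v) w
      else if v \<noteq> [] \<and> v = osq ox (Suc j) (length v - 1) @ [\<alpha> (Suc j + length v - 1)]
        then (case w of [] \<Rightarrow> [] | y # w' \<Rightarrow> f (Suc j + length v) y # w')
      else w)" by simp
    show ?thesis
    proof (cases "x # v = osq ox j (length (x # v))")
      case True thus ?thesis using L e1 jj by simp
    next
      case F: False
      show ?thesis unfolding e2[OF F] using L e1 F jj by (simp only: if_False)
    qed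
  next
    case False
    have ne: "x # v \<noteq> osq ox j (length (x # v))" using False by (simp add: osq_Suc)
    show ?thesis
    proof (cases "x = \<alpha> j")
      case True
      show ?thesis
      proof (cases v)
        case Nil thus ?thesis using True False by (simp add: osq_Suc split: list.split)
      next
        case (Cons y v')
        have "\<not> (x # v = osq ox j (length (x # v) - 1) @ [\<alpha> (j + length (x # v) - 1)])"
          using False Cons by (simp add: osq_Suc)
        thus ?thesis using ne True False Cons by simp
      qed
    next
      case F2: False
      have "\<not> (x # v = osq ox j (length (x # v) - 1) @ [\<alpha> (j + length (x # v) - 1)])"
        using False F2 by (cases v) (simp_all add: osq_Suc)
      thus ?thesis using ne F2 False by simp
    qed
  qed
qed

lemma til_nw: "\<not> wordT X j w \<Longrightarrow> til X j f ox \<alpha> w = w" by (simp add: til_def)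
lemma til_w: "wordT X j w \<Longrightarrow> til X j f ox \<alpha> w = tilraw f ox \<alpha> j w" by (simp add: til_def)

lemma til_word:
  assumes "\<And>n x. n > j \<Longrightarrow> x \<in> X n \<Longrightarrow> f n x \<in> X n" "wordT X j w"
  shows "wordT X j (til X j f ox \<alpha> w) \<and> length (til X j f ox \<alpha> w) = length w"
  using tilraw_word[OF assms] assms(2) by (simp add: til_w)

lemma til_Aut:
  assumes "\<And>n x. n > j \<Longrightarrow> x \<in> X n \<Longrightarrow> f n x \<in> X n \<and> g n x \<in> X n \<and> f n (g n x) = x \<and> g n (f n x) = x"
  shows "til X j f ox \<alpha> \<in> Aut X j"
proof (rule AutI[where g="til X j g ox \<alpha>"])
  have mf: "\<And>n x. n > j \<Longrightarrow> x \<in> X n \<Longrightarrow> f n x \<in> X n" and mg: "\<And>n x. n > j \<Longrightarrow> x \<in> X n \<Longrightarrow> g n x \<in> X n"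
    using assms by auto
  fix w assume w: "wordT X j w"
  show "wordT X j (til X j f ox \<alpha> w) \<and> length (til X j f ox \<alpha> w) = length w" using til_word[OF mf w] .
  show "wordT X j (til X j g ox \<alpha> w)" using til_word[OF mg w] by simp
  show "til X j f ox \<alpha> (til X j g ox \<alpha> w) = w"
    using til_word[OF mg w] w tilraw_comp[where f=f and ox=ox and \<alpha>=\<alpha>, OF mg w] tilraw_idf[where f="\<lambda>n x. f n (g n x)" and ox=ox and \<alpha>=\<alpha> and w=w and j=j and X=X] assms
    by (simp add: til_w)
  show "til X j g ox \<alpha> (til X j f ox \<alpha> w) = w"
    using til_word[OF mf w] w tilraw_comp[where f=g and ox=ox and \<alpha>=\<alpha>, OF mf w] tilraw_idf[where f="\<lambda>n x. g n (f n x)" and ox=ox and \<alpha>=\<alpha> and w=w and j=j and X=X] assms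
    by (simp add: til_w)
next
  fix u v assume "wordT X j (u @ v)"
  thus "take (length u) (til X j f ox \<alpha> (u @ v)) = til X j f ox \<alpha> u"
    using tilraw_take by (simp add: til_w wordT_append)
next
  fix w assume "\<not> wordT X j w" thus "til X j f ox \<alpha> w = w" by (rule til_nw)
qed

lemma til_comp_fun:
  assumes "\<And>n x. n > j \<Longrightarrow> x \<in> X n \<Longrightarrow> f' n x \<in> X n"
  shows "til X j f ox \<alpha> \<circ> til X j f' ox \<alpha> = til X j (\<lambda>n x. f n (f' n x)) ox \<alpha>"
proof
  fix w show "(til X j f ox \<alpha> \<circ> til X j f' ox \<alpha>) w = til X j (\<lambda>n x. f n (f' n x)) ox \<alpha> w"
  proof (cases "wordT X j w")
    case True thus ?thesis using til_word[OF assms True] tilraw_comp[OF assms True] by (simp add: til_w)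
  qed (simp add: til_nw)
qed

lemma til_cong_fun:
  assumes "\<And>n x. n > j \<Longrightarrow> x \<in> X n \<Longrightarrow> f n x = f' n x"
  shows "til X j f ox \<alpha> = til X j f' ox \<alpha>"
proof
  fix w show "til X j f ox \<alpha> w = til X j f' ox \<alpha> w"
  proof (cases "wordT X j w")
    case True thus ?thesis using tilraw_cong[OF assms True] by (simp add: til_w)
  qed (simp add: til_nw)
qed

lemma til_id_fun:
  assumes "\<And>n x. n > j \<Longrightarrow> x \<in> X n \<Longrightarrow> f n x = x"
  shows "til X j f ox \<alpha> = id"
proof
  fix w show "til X j f ox \<alpha> w = id w"
  proof (cases "wordT X j w")
    case True thus ?thesis using tilraw_idf[OF assms True] by (simp add: til_w)
  qed (simp add: til_nw)
qed

lemma til_commute_fun: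
  assumes "\<And>n x. n > j \<Longrightarrow> x \<in> X n \<Longrightarrow> f n x \<in> X n" "\<And>n x. n > j \<Longrightarrow> x \<in> X n \<Longrightarrow> g n x \<in> X n"
    "\<And>i. i \<ge> j \<Longrightarrow> \<alpha> i \<noteq> \<beta> i"
  shows "til X j f ox \<alpha> \<circ> til X j g ox \<beta> = til X j g ox \<beta> \<circ> til X j f ox \<alpha>"
proof
  fix w show "(til X j f ox \<alpha> \<circ> til X j g ox \<beta>) w = (til X j g ox \<beta> \<circ> til X j f ox \<alpha>) w"
  proof (cases "wordT X j w")
    case True thus ?thesis using til_word[OF assms(1) True] til_word[OF assms(2) True]
        tilraw_commute[OF assms(3)] by (simp add: til_w)
  qed (simp add: til_nw)
qed

lemma sect_id: "sect X j id v = id"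
  by (rule ext) (simp add: sect_def)

lemma sect_comp:
  assumes h: "h \<in> Aut X j" and h': "h' \<in> Aut X j" and v: "wordT X j v"
  shows "sect X j (h \<circ> h') v = sect X j h (h' v) \<circ> sect X j h' v"
proof
  fix w
  have lv: "length (h' v) = length v" using AutD(2)[OF h' v] .
  show "sect X j (h \<circ> h') v w = (sect X j h (h' v) \<circ> sect X j h' v) w"
  proof (cases "wordT X (j + length v) w")
    case True
    have vw: "wordT X j (v @ w)" using v True by (simp add: wordT_append)
    define r where "r = drop (length v) (h' (v @ w))"
    have e: "h' (v @ w) = h' v @ r" using Aut_app[OF h' vw] r_def by simp
    have rw: "wordT X (j + length v) r" using AutD(1)[OF h' vw] e lv by (simp add: wordT_append)
    show ?thesis using True rw e lv by (simp add: sect_def r_def[symmetric])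
  next
    case False thus ?thesis by (simp add: sect_def lv)
  qed
qed

lemma sect_embA:
  assumes "v \<noteq> []" "wordT X j v"
  shows "sect X j (embA X j a) v = id"
proof
  fix w show "sect X j (embA X j a) v w = id w"
    using assms by (cases v) (auto simp: sect_def wordT_append)
qed

lemma sect_til:
  assumes v: "wordT X j v"
  shows "sect X j (til X j f ox \<alpha>) v =
     (if v = osq ox j (length v) then til X (j + length v) f ox \<alpha>
      else if v \<noteq> [] \<and> v = osq ox j (length v - 1) @ [\<alpha> (j + length v - 1)]
        then embA X (j + length v) (f (j + length v))
      else id)"
proof
  fix w
  show "sect X j (til X j f ox \<alpha>) v w = (if v = osq ox j (length v) then til X (j + length v) f ox \<alpha>
      else if v \<noteq> [] \<and> v = osq ox j (length v - 1) @ [\<alpha> (j + length v - 1)]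
        then embA X (j + length v) (f (j + length v))
      else id) w"
  proof (cases "wordT X (j + length v) w")
    case True
    have vw: "wordT X j (v @ w)" using v True by (simp add: wordT_append)
    have "sect X j (til X j f ox \<alpha>) v w = drop (length v) (tilraw f ox \<alpha> j (v @ w))"
      using True vw by (simp add: sect_def til_w)
    also note tilraw_sect
    finally show ?thesis using True by (auto simp: til_w embA_def split: list.splits)
  next
    case False thus ?thesis by (simp add: sect_def til_nw embA_def)
  qed
qed

lemma autgrp_inv_eq:
  assumes "y \<in> Aut X j" "x \<circ> y = id" "y \<circ> x = id"
  shows "m_inv (autgrp X j) x = y"
  unfolding m_inv_def autgrp_def
proof (simp, rule the_equality)
  show "y \<in> Aut X j \<and> x \<circ> y = id \<and> y \<circ> x = id" using assms by simp
next
  fix z assume "z \<in> Aut X j \<and> x \<circ> z = id \<and> z \<circ> x = id"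
  hence "z = (y \<circ> x) \<circ> z" using assms(3) by simp
  also have "\<dots> = y \<circ> (x \<circ> z)" by (simp add: comp_assoc)
  also have "\<dots> = y" using \<open>z \<in> Aut X j \<and> x \<circ> z = id \<and> z \<circ> x = id\<close> by simp
  finally show "z = y" .
qed

lemma embA_mult:
  assumes "a \<in> Bij (X j)" "b \<in> Bij (X j)"
  shows "embA X j a \<circ> embA X j b = embA X j (a \<otimes>\<^bsub>BijGroup (X j)\<^esub> b)"
proof
  fix w
  have bb: "bij_betw b (X j) (X j)" using assms by (simp add: Bij_def)
  show "(embA X j a \<circ> embA X j b) w = embA X j (a \<otimes>\<^bsub>BijGroup (X j)\<^esub> b) w"
    using assms bb by (cases w) (auto simp: BijGroup_def compose_def dest: bij_betwE)
qed

lemma embA_one: "embA X j (\<one>\<^bsub>BijGroup (X j)\<^esub>) = id"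
proof
  fix w show "embA X j (\<one>\<^bsub>BijGroup (X j)\<^esub>) w = id w"
    by (cases w) (auto simp: BijGroup_def)
qed

lemma embA_inv:
  assumes "a \<in> Bij (X j)"
  shows "m_inv (autgrp X j) (embA X j a) = embA X j (inv\<^bsub>BijGroup (X j)\<^esub> a)"
proof (rule autgrp_inv_eq)
  interpret B: group "BijGroup (X j)" by (rule group_BijGroup)
  have ai: "inv\<^bsub>BijGroup (X j)\<^esub> a \<in> Bij (X j)" using assms B.inv_closed by (simp add: BijGroup_def)
  show "embA X j (inv\<^bsub>BijGroup (X j)\<^esub> a) \<in> Aut X j" using embA_Aut[where X=X and j=j, OF ai] .
  have c: "a \<in> carrier (BijGroup (X j))" using assms by (simp add: BijGroup_def)
  show "embA X j a \<circ> embA X j (inv\<^bsub>BijGroup (X j)\<^esub> a) = id"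
    using embA_mult[where X=X and j=j, OF assms ai] B.r_inv[OF c] embA_one by simp
  show "embA X j (inv\<^bsub>BijGroup (X j)\<^esub> a) \<circ> embA X j a = id"
    using embA_mult[where X=X and j=j, OF ai assms] B.l_inv[OF c] embA_one by simp
qed

lemma fold_comp: "(\<lambda>f g x. f (g x)) = (\<circ>)" by (simp add: fun_eq_iff)
lemmas fold_id = id_def[symmetric]
lemmas nf = fold_id fold_comp

primrec secl :: "(nat \<Rightarrow> 'x set) \<Rightarrow> ('x list \<Rightarrow> 'x list) list \<Rightarrow> 'x list \<Rightarrow> ('x list \<Rightarrow> 'x list) list" where
  "secl X [] v = []"
| "secl X (h # M) v = sect X 1 h (foldr (\<circ>) M id v) # secl X M v"

lemma sect_foldr:
  assumes "set M \<subseteq> Aut X 1" "wordT X 1 v"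
  shows "sect X 1 (foldr (\<circ>) M id) v = foldr (\<circ>) (secl X M v) id"
  using assms
proof (induction M)
  case Nil thus ?case by (simp add: sect_id fold_id)
next
  case (Cons h M)
  have e1: "foldr (\<circ>) (h # M) id = h \<circ> foldr (\<circ>) M id" by simp
  have e2: "foldr (\<circ>) (secl X (h # M) v) id = sect X 1 h (foldr (\<circ>) M id v) \<circ> foldr (\<circ>) (secl X M v) id" by simp
  have e3: "sect X 1 (h \<circ> foldr (\<circ>) M id) v = sect X 1 h (foldr (\<circ>) M id v) \<circ> sect X 1 (foldr (\<circ>) M id) v"
    using Cons.prems by (intro sect_comp foldr_Aut) auto
  have e4: "sect X 1 (foldr (\<circ>) M id) v = foldr (\<circ>) (secl X M v) id" using Cons by (simp add: fold_id fold_comp)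
  show ?case unfolding e1 e2 e3 e4 ..
qed

lemma length_secl[simp]: "length (secl X M v) = length M"
  by (induction M) auto

lemma secl_nth: "i < length M \<Longrightarrow> secl X M v ! i = sect X 1 (M ! i) (foldr (\<circ>) (drop (Suc i) M) id v)"
proof (induction M arbitrary: i)
  case (Cons h M)
  thus ?case by (cases i) (auto simp: fold_id fold_comp)
qed simp

lemma secl_mem:
  assumes "s \<in> set (secl X M v)"
  shows "\<exists>i < length M. s = sect X 1 (M ! i) (foldr (\<circ>) (drop (Suc i) M) id v)"
proof -
  obtain i where "i < length (secl X M v)" "s = secl X M v ! i" using assms by (auto simp: in_set_conv_nth)
  thus ?thesis using secl_nth[of i M X v] by auto
qed

lemma concat_replicate_split:
  "concat (replicate n M) = pre @ h # suf \<Longrightarrow>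
     \<exists>pre' suf' t. M = pre' @ h # suf' \<and> suf = suf' @ concat (replicate t M)"
proof (induction n arbitrary: pre)
  case 0 thus ?case by simp
next
  case (Suc n)
  hence e: "M @ concat (replicate n M) = pre @ h # suf" by simp
  then obtain us where "(M = pre @ us \<and> us @ concat (replicate n M) = h # suf) \<or>
                        (M @ us = pre \<and> concat (replicate n M) = us @ h # suf)"
    by (auto simp: append_eq_append_conv2)
  thus ?case
  proof
    assume a: "M = pre @ us \<and> us @ concat (replicate n M) = h # suf"
    show ?thesis
    proof (cases us)
      case Nil thus ?thesis using a Suc.IH[of "[]"] by auto
    next
      case (Cons u us')
      thus ?thesis using a by (intro exI[of _ pre] exI[of _ us'] exI[of _ n]) auto
    qed
  next
    assume "M @ us = pre \<and> concat (replicate n M) = us @ h # suf"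
    thus ?thesis using Suc.IH by blast
  qed
qed

lemma finite_words:
  assumes "\<And>i. i \<ge> j \<Longrightarrow> finite (X i)"
  shows "finite {w. wordT X j w \<and> length w = k}"
proof -
  have "{w. wordT X j w \<and> length w = k} \<subseteq> {xs. set xs \<subseteq> (\<Union>i\<in>{j..<j+k}. X i) \<and> length xs = k}"
  proof (rule subsetI, rule CollectI, rule conjI)
    fix w assume w: "w \<in> {w. wordT X j w \<and> length w = k}"
    show "length w = k" using w by simp
    show "set w \<subseteq> (\<Union>i\<in>{j..<j+k}. X i)"
    proof
      fix x assume "x \<in> set w"
      then obtain i where "i < length w" "w ! i = x" by (auto simp: in_set_conv_nth)
      thus "x \<in> (\<Union>i\<in>{j..<j+k}. X i)" using w by (auto simp: wordT_def intro!: bexI[of _ "j+i"])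
    qed
  qed
  moreover have "finite (\<Union>i\<in>{j..<j+k}. X i)" using assms by (intro finite_UN_I) auto
  hence "finite {xs. set xs \<subseteq> (\<Union>i\<in>{j..<j+k}. X i) \<and> length xs = k}"
    by (rule finite_lists_length_eq)
  ultimately show ?thesis by (rule finite_subset)
qed

lemma orbit_exists:
  assumes h: "h \<in> Aut X j" and v: "wordT X j v" and fin: "\<And>i. i \<ge> j \<Longrightarrow> finite (X i)"
  shows "\<exists>n>0. (h ^^ n) v = v"
proof -
  have hA: "h ^^ n \<in> Aut X j" for n
  proof (induction n)
    case (Suc n) 
    have e: "h ^^ Suc n = h \<circ> h ^^ n" by simp
    show ?case unfolding e by (rule Aut_comp[OF h Suc])
  qed (simp add: id_Aut[unfolded id_def])
  have "range (\<lambda>n. (h ^^ n) v) \<subseteq> {w. wordT X j w \<and> length w = length v}"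
  proof
    fix y assume "y \<in> range (\<lambda>n. (h ^^ n) v)"
    then obtain n where "y = (h ^^ n) v" by blast
    thus "y \<in> {w. wordT X j w \<and> length w = length v}" using AutD(1)[OF hA v, of n] AutD(2)[OF hA v, of n] by simp
  qed
  hence "finite (range (\<lambda>n. (h ^^ n) v))" by (rule finite_subset[OF _ finite_words[OF fin]])
  hence "\<not> inj (\<lambda>n. (h ^^ n) v)" by (metis finite_imageD infinite_UNIV_nat)
  then obtain a b where ab: "a \<noteq> b" "(h ^^ a) v = (h ^^ b) v" unfolding inj_def by blast
  have main: "\<exists>n>0. (h ^^ n) v = v" if "a < b" "(h ^^ a) v = (h ^^ b) v" for a b
  proof -
    have "b = a + (b - a)" using that by simp
    hence "(h ^^ b) v = (h ^^ a) ((h ^^ (b - a)) v)" by (metis funpow_add comp_apply)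
    hence "(h ^^ a) ((h ^^ (b - a)) v) = (h ^^ a) v" using that by simp
    hence "(h ^^ (b - a)) v = v" using inj_fn[OF Aut_inj[OF h], of a] by (auto dest: injD)
    thus ?thesis using that by (intro exI[of _ "b - a"]) auto
  qed
  show ?thesis
  proof (cases "a < b")
    case True thus ?thesis using main[of a b] ab by blast
  next
    case False hence "b < a" using ab(1) by simp
    thus ?thesis using main[of b a] ab(2) by simp
  qed
qed

lemma orblen:
  assumes h: "h \<in> Aut X j" and v: "wordT X j v" and fin: "\<And>i. i \<ge> j \<Longrightarrow> finite (X i)"
  shows "orblen h v > 0" "(h ^^ orblen h v) v = v" "\<And>n. 0 < n \<Longrightarrow> n < orblen h v \<Longrightarrow> (h ^^ n) v \<noteq> v"
proof -
  have ex: "\<exists>n. 0 < n \<and> (h ^^ n) v = v" using orbit_exists[OF assms] by blast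
  show "orblen h v > 0" "(h ^^ orblen h v) v = v" using LeastI_ex[OF ex] by (auto simp: orblen_def)
  show "\<And>n. 0 < n \<Longrightarrow> n < orblen h v \<Longrightarrow> (h ^^ n) v \<noteq> v"
    using not_less_Least unfolding orblen_def by blast
qed

lemma funpow_period:
  assumes "(h ^^ p) v = v" shows "(h ^^ (p * r)) v = v"
proof (induction r)
  case (Suc r)
  have "(h ^^ (p * Suc r)) v = (h ^^ p) ((h ^^ (p * r)) v)" by (simp add: funpow_add)
  thus ?case using Suc assms by simp
qed simp

lemma funpow_mod:
  assumes "(h ^^ p) v = v" shows "(h ^^ n) v = (h ^^ (n mod p)) v"
proof -
  have "(h ^^ n) v = (h ^^ (n mod p)) ((h ^^ (p * (n div p))) v)"
    by (metis comp_apply funpow_add mod_mult_div_eq mult.commute)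
  thus ?thesis using funpow_period[OF assms] by simp
qed

lemma funpow_Aut: assumes h: "h \<in> Aut X j" shows "h ^^ n \<in> Aut X j"
proof (induction n)
  case (Suc n) 
  have e: "h ^^ Suc n = h \<circ> h ^^ n" by simp
  show ?case unfolding e by (rule Aut_comp[OF h Suc])
qed (simp add: id_Aut[unfolded id_def])

lemma finite_Bij: "finite S \<Longrightarrow> finite (Bij S)"
proof -
  assume "finite S"
  hence "finite (S \<rightarrow>\<^sub>E S)" by (intro finite_PiE) auto
  moreover have "Bij S \<subseteq> S \<rightarrow>\<^sub>E S" by (auto simp: PiE_iff dest: Bij_imp_funcset Bij_imp_extensional extensional_arb)
  ultimately show ?thesis using finite_subset by blast
qed

lemma tilraw_single: "tilraw f ox \<alpha> j [z] = [z]" by simp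

lemma take_snoc_nth: "length y = Suc m \<Longrightarrow> y = take m y @ [y ! m]"
  by (metis lessI take_Suc_conv_app_nth take_all_iff order_refl)

lemma iterate_local:
  assumes hu: "h u = u" and a: "a \<in> carrier (BijGroup S)"
    and loc: "\<And>z. z \<in> S \<Longrightarrow> h (u @ [z]) = u @ [a z]" and z: "z \<in> S"
  shows "(h ^^ r) (u @ [z]) = u @ [(a [^]\<^bsub>BijGroup S\<^esub> r) z]"
proof (induction r)
  interpret B: group "BijGroup S" by (rule group_BijGroup)
  case 0 show ?case using z by (simp add: BijGroup_def)
next
  interpret B: group "BijGroup S" by (rule group_BijGroup)
  case (Suc r)
  have ar: "a [^]\<^bsub>BijGroup S\<^esub> r \<in> Bij S" using B.nat_pow_closed[OF a] by (simp add: BijGroup_def)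
  have ab: "a \<in> Bij S" using a by (simp add: BijGroup_def)
  have zr: "(a [^]\<^bsub>BijGroup S\<^esub> r) z \<in> S" using ar z by (auto simp: Bij_def bij_betw_def)
  have "(h ^^ Suc r) (u @ [z]) = h ((h ^^ r) (u @ [z]))" by simp
  also have "\<dots> = u @ [a ((a [^]\<^bsub>BijGroup S\<^esub> r) z)]" using Suc loc[OF zr] by simp
  also have "a ((a [^]\<^bsub>BijGroup S\<^esub> r) z) = (a [^]\<^bsub>BijGroup S\<^esub> Suc r) z"
    using B.nat_pow_Suc2[OF a, of r] ab ar z by (simp add: BijGroup_def compose_def)
  finally show ?case .
qed

lemma foldr_app_append: "foldr (\<circ>) (xs @ ys) id x = foldr (\<circ>) xs id (foldr (\<circ>) ys id x)"
  by (induction xs) auto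

lemma secl_rep:
  assumes "s \<in> set (secl X (concat (replicate n M)) v)"
  shows "\<exists>j<length M. \<exists>t. s = sect X 1 (M ! j) (foldr (\<circ>) (drop (Suc j) M) id ((foldr (\<circ>) M id ^^ t) v))"
proof -
  let ?N = "concat (replicate n M)"
  obtain i where i: "i < length ?N" "s = sect X 1 (?N ! i) (foldr (\<circ>) (drop (Suc i) ?N) id v)"
    using secl_mem[OF assms] by blast
  define h where "h = ?N ! i"
  have "?N = take i ?N @ h # drop (Suc i) ?N" unfolding h_def using i(1) by (rule id_take_nth_drop)
  then obtain pre' suf' t where ps: "M = pre' @ h # suf'" "drop (Suc i) ?N = suf' @ concat (replicate t M)"
    using concat_replicate_split by metis
  define j where "j = length pre'"
  have j: "j < length M" "M ! j = h" "drop (Suc j) M = suf'" unfolding j_def by (subst ps(1), simp)+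
  note i = i[folded h_def]
  have "foldr (\<circ>) (drop (Suc i) ?N) id v = foldr (\<circ>) suf' id (foldr (\<circ>) (concat (replicate t M)) id v)"
    unfolding ps(2) by (rule foldr_app_append)
  also have "foldr (\<circ>) (concat (replicate t M)) id = foldr (\<circ>) M id ^^ t" by (rule funpow_foldr[symmetric])
  finally show ?thesis using i j by metis
qed

lemma foldr_mult_closed:
  assumes "group G" "set l \<subseteq> carrier G" shows "foldr (mult G) l (one G) \<in> carrier G"
  using assms(2) by (induction l) (auto intro: monoid.m_closed[OF group.is_monoid[OF assms(1)]] monoid.one_closed[OF group.is_monoid[OF assms(1)]])

lemma foldr_mult_append:
  assumes G: "group G" and "set l1 \<subseteq> carrier G" "set l2 \<subseteq> carrier G"
  shows "foldr (mult G) (l1 @ l2) (one G) = mult G (foldr (mult G) l1 (one G)) (foldr (mult G) l2 (one G))"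
  using assms(2)
proof (induction l1)
  case Nil thus ?case using foldr_mult_closed[OF G assms(3)] monoid.l_one[OF group.is_monoid[OF G]] by simp
next
  case (Cons x l1)
  hence x: "x \<in> carrier G" and l1: "set l1 \<subseteq> carrier G" by auto
  have "foldr (mult G) ((x # l1) @ l2) (one G) = mult G x (mult G (foldr (mult G) l1 (one G)) (foldr (mult G) l2 (one G)))"
    using Cons.IH[OF l1] by simp
  also have "\<dots> = mult G (mult G x (foldr (mult G) l1 (one G))) (foldr (mult G) l2 (one G))"
    using monoid.m_assoc[OF group.is_monoid[OF G] x foldr_mult_closed[OF G l1] foldr_mult_closed[OF G assms(3)]] by simp
  finally show ?case by simp
qed

lemma countable_generate:
  assumes G: "group G" and S: "S \<subseteq> carrier G" "countable S"
  shows "countable (generate G S)"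
proof -
  let ?L = "lists (S \<union> m_inv G ` S)"
  have Sc: "S \<union> m_inv G ` S \<subseteq> carrier G" using S(1) group.inv_closed[OF G] by auto
  have Lc: "?L \<subseteq> {l. set l \<subseteq> carrier G}" using Sc by (auto simp: lists_eq_set)
  have "generate G S \<subseteq> (\<lambda>l. foldr (mult G) l (one G)) ` ?L"
  proof
    fix h assume "h \<in> generate G S"
    thus "h \<in> (\<lambda>l. foldr (mult G) l (one G)) ` ?L"
    proof (induction rule: generate.induct)
      case one show ?case by (rule image_eqI[of _ _ "[]"]) auto
    next
      case (incl h)
      have "h = foldr (mult G) [h] (one G)" using incl S(1) monoid.r_one[OF group.is_monoid[OF G]] by auto
      thus ?case using incl by (intro image_eqI[of _ _ "[h]"]) auto
    next
      case (inv h)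
      have hc: "m_inv G h \<in> carrier G" using inv S(1) group.inv_closed[OF G] by auto
      have "m_inv G h = foldr (mult G) [m_inv G h] (one G)" using hc monoid.r_one[OF group.is_monoid[OF G]] by auto
      thus ?case using inv by (intro image_eqI[of _ _ "[m_inv G h]"]) auto
    next
      case (eng h1 h2)
      then obtain l1 l2 where l: "l1 \<in> ?L" "l2 \<in> ?L" "h1 = foldr (mult G) l1 (one G)" "h2 = foldr (mult G) l2 (one G)"
        by blast
      have c1: "set l1 \<subseteq> carrier G" "set l2 \<subseteq> carrier G" using l(1,2) Lc by auto
      have "mult G h1 h2 = foldr (mult G) (l1 @ l2) (one G)"
        unfolding foldr_mult_append[OF G c1] l(3,4) ..
      thus ?case using l by (intro image_eqI[of _ _ "l1 @ l2"]) auto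
    qed
  qed
  moreover have "countable ((\<lambda>l. foldr (mult G) l (one G)) ` ?L)" using S(2) by auto
  ultimately show ?thesis using countable_subset by blast
qed

locale setting =
  fixes Q :: "('q, 'c) monoid_scheme" and G :: "('g, 'd) monoid_scheme"
    and X :: "nat \<Rightarrow> 'x set" and ox :: "nat \<Rightarrow> 'x"
    and actQ :: "nat \<Rightarrow> 'q \<Rightarrow> 'x \<Rightarrow> 'x" and actG :: "nat \<Rightarrow> 'g \<Rightarrow> 'x \<Rightarrow> 'x"
  assumes grpQ: "group Q" and grpG: "group G"
    and finX: "\<And>n. n \<ge> 1 \<Longrightarrow> finite (X n)"
    and actionQ: "\<And>n. n \<ge> 1 \<Longrightarrow> group_action Q (X n) (actQ n)"
    and actionG: "\<And>n. n \<ge> 1 \<Longrightarrow> group_action G (X n) (actG n)"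
    and o_in: "\<And>i. i \<ge> 1 \<Longrightarrow> ox i \<in> X i"
begin

abbreviation "A n \<equiv> Agrp X actQ actG Q G n"
abbreviation "tQ \<alpha> j q \<equiv> til X j (\<lambda>n. actQ n q) ox \<alpha>"
abbreviation "tG \<beta> j g \<equiv> til X j (\<lambda>n. actG n g) ox \<beta>"

lemma actQ_Bij: "n \<ge> 1 \<Longrightarrow> q \<in> carrier Q \<Longrightarrow> actQ n q \<in> Bij (X n)"
  using group_action.bij_prop0[OF actionQ] by blast
lemma actG_Bij: "n \<ge> 1 \<Longrightarrow> g \<in> carrier G \<Longrightarrow> actG n g \<in> Bij (X n)"
  using group_action.bij_prop0[OF actionG] by blast

lemma A_sub: assumes "n \<ge> 1" shows "A n \<subseteq> Bij (X n)"
proof -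
  interpret B: group "BijGroup (X n)" by (rule group_BijGroup)
  have "actQ n ` carrier Q \<union> actG n ` carrier G \<subseteq> carrier (BijGroup (X n))"
    using actQ_Bij[OF assms] actG_Bij[OF assms] by (auto simp: BijGroup_def)
  from B.generate_incl[OF this] show ?thesis by (simp add: Agrp_def BijGroup_def)
qed

lemma actQ_A: "q \<in> carrier Q \<Longrightarrow> actQ n q \<in> A n"
  unfolding Agrp_def by (rule generate.incl) auto
lemma actG_A: "g \<in> carrier G \<Longrightarrow> actG n g \<in> A n"
  unfolding Agrp_def by (rule generate.incl) auto
lemma one_A: "\<one>\<^bsub>BijGroup (X n)\<^esub> \<in> A n"
  unfolding Agrp_def by (rule generate.one)
lemma mult_A: "a \<in> A n \<Longrightarrow> b \<in> A n \<Longrightarrow> a \<otimes>\<^bsub>BijGroup (X n)\<^esub> b \<in> A n"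
  unfolding Agrp_def by (rule generate.eng)
lemma inv_A: assumes "n \<ge> 1" "a \<in> A n" shows "inv\<^bsub>BijGroup (X n)\<^esub> a \<in> A n"
proof -
  interpret B: group "BijGroup (X n)" by (rule group_BijGroup)
  have "actQ n ` carrier Q \<union> actG n ` carrier G \<subseteq> carrier (BijGroup (X n))"
    using actQ_Bij[OF assms(1)] actG_Bij[OF assms(1)] by (auto simp: BijGroup_def)
  from B.generate_m_inv_closed[OF this] assms show ?thesis by (simp add: Agrp_def)
qed
lemma mult_Bij_apply: "a \<in> Bij S \<Longrightarrow> b \<in> Bij S \<Longrightarrow> x \<in> S \<Longrightarrow> (a \<otimes>\<^bsub>BijGroup S\<^esub> b) x = a (b x)"
  by (simp add: BijGroup_def compose_def)
lemma Bij_in: "a \<in> Bij S \<Longrightarrow> x \<in> S \<Longrightarrow> a x \<in> S"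
  by (auto simp: Bij_def bij_betw_def)

lemma actQ_in: "n \<ge> 1 \<Longrightarrow> q \<in> carrier Q \<Longrightarrow> x \<in> X n \<Longrightarrow> actQ n q x \<in> X n"
  by (rule Bij_in[OF actQ_Bij])
lemma actG_in: "n \<ge> 1 \<Longrightarrow> g \<in> carrier G \<Longrightarrow> x \<in> X n \<Longrightarrow> actG n g x \<in> X n"
  by (rule Bij_in[OF actG_Bij])
lemma actQ_comp: "n \<ge> 1 \<Longrightarrow> x \<in> X n \<Longrightarrow> q \<in> carrier Q \<Longrightarrow> q' \<in> carrier Q \<Longrightarrow>
   actQ n q (actQ n q' x) = actQ n (q \<otimes>\<^bsub>Q\<^esub> q') x"
  using group_action.composition_rule[OF actionQ, of n x q q'] by simp
lemma actG_comp: "n \<ge> 1 \<Longrightarrow> x \<in> X n \<Longrightarrow> g \<in> carrier G \<Longrightarrow> g' \<in> carrier G \<Longrightarrow>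
   actG n g (actG n g' x) = actG n (g \<otimes>\<^bsub>G\<^esub> g') x"
  using group_action.composition_rule[OF actionG, of n x g g'] by simp
lemma actQ_one: "n \<ge> 1 \<Longrightarrow> x \<in> X n \<Longrightarrow> actQ n \<one>\<^bsub>Q\<^esub> x = x"
  using fun_cong[OF group_action.id_eq_one[OF actionQ[of n]], of x] by simp
lemma actG_one: "n \<ge> 1 \<Longrightarrow> x \<in> X n \<Longrightarrow> actG n \<one>\<^bsub>G\<^esub> x = x"
  using fun_cong[OF group_action.id_eq_one[OF actionG[of n]], of x] by simp

lemma tQ_Aut: assumes "q \<in> carrier Q" shows "tQ \<alpha> j q \<in> Aut X j"
proof (rule til_Aut[where g="\<lambda>n. actQ n (inv\<^bsub>Q\<^esub> q)"])
  fix n x assume "j < n" "x \<in> X n"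
  hence n: "n \<ge> 1" by simp
  have iq: "inv\<^bsub>Q\<^esub> q \<in> carrier Q" using assms group.inv_closed[OF grpQ] by blast
  show "actQ n q x \<in> X n \<and> actQ n (inv\<^bsub>Q\<^esub> q) x \<in> X n \<and> actQ n q (actQ n (inv\<^bsub>Q\<^esub> q) x) = x \<and>
          actQ n (inv\<^bsub>Q\<^esub> q) (actQ n q x) = x"
  proof (intro conjI)
    show "actQ n q x \<in> X n" by (rule actQ_in[OF n assms \<open>x \<in> X n\<close>])
    show "actQ n (inv\<^bsub>Q\<^esub> q) x \<in> X n" by (rule actQ_in[OF n iq \<open>x \<in> X n\<close>])
    show "actQ n q (actQ n (inv\<^bsub>Q\<^esub> q) x) = x"
      using actQ_comp[OF n actQ_in[OF n iq \<open>x \<in> X n\<close>] assms iq] actQ_comp[OF n \<open>x \<in> X n\<close> assms iq] group.r_inv[OF grpQ assms] actQ_one[OF n \<open>x \<in> X n\<close>] by simp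
    show "actQ n (inv\<^bsub>Q\<^esub> q) (actQ n q x) = x"
      using actQ_comp[OF n \<open>x \<in> X n\<close> iq assms] group.l_inv[OF grpQ assms] actQ_one[OF n \<open>x \<in> X n\<close>] by simp
  qed
qed

lemma tG_Aut: assumes "g \<in> carrier G" shows "tG \<beta> j g \<in> Aut X j"
proof (rule til_Aut[where g="\<lambda>n. actG n (inv\<^bsub>G\<^esub> g)"])
  fix n x assume "j < n" "x \<in> X n"
  hence n: "n \<ge> 1" by simp
  have iq: "inv\<^bsub>G\<^esub> g \<in> carrier G" using assms group.inv_closed[OF grpG] by blast
  show "actG n g x \<in> X n \<and> actG n (inv\<^bsub>G\<^esub> g) x \<in> X n \<and> actG n g (actG n (inv\<^bsub>G\<^esub> g) x) = x \<and>
          actG n (inv\<^bsub>G\<^esub> g) (actG n g x) = x"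
  proof (intro conjI)
    show "actG n g x \<in> X n" by (rule actG_in[OF n assms \<open>x \<in> X n\<close>])
    show "actG n (inv\<^bsub>G\<^esub> g) x \<in> X n" by (rule actG_in[OF n iq \<open>x \<in> X n\<close>])
    show "actG n g (actG n (inv\<^bsub>G\<^esub> g) x) = x"
      using actG_comp[OF n actG_in[OF n iq \<open>x \<in> X n\<close>] assms iq] actG_comp[OF n \<open>x \<in> X n\<close> assms iq] group.r_inv[OF grpG assms] actG_one[OF n \<open>x \<in> X n\<close>] by simp
    show "actG n (inv\<^bsub>G\<^esub> g) (actG n g x) = x"
      using actG_comp[OF n \<open>x \<in> X n\<close> iq assms] group.l_inv[OF grpG assms] actG_one[OF n \<open>x \<in> X n\<close>] by simp
  qed
qed

lemma tQ_mult: assumes "q \<in> carrier Q" "q' \<in> carrier Q"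
  shows "tQ \<alpha> j q \<circ> tQ \<alpha> j q' = tQ \<alpha> j (q \<otimes>\<^bsub>Q\<^esub> q')"
proof -
  have "tQ \<alpha> j q \<circ> tQ \<alpha> j q' = til X j (\<lambda>n x. actQ n q (actQ n q' x)) ox \<alpha>"
    by (rule til_comp_fun, rule actQ_in) (use assms in auto)
  also have "\<dots> = tQ \<alpha> j (q \<otimes>\<^bsub>Q\<^esub> q')"
    by (rule til_cong_fun, rule actQ_comp) (use assms in auto)
  finally show ?thesis .
qed

lemma tG_mult: assumes "g \<in> carrier G" "g' \<in> carrier G"
  shows "tG \<beta> j g \<circ> tG \<beta> j g' = tG \<beta> j (g \<otimes>\<^bsub>G\<^esub> g')"
proof -
  have "tG \<beta> j g \<circ> tG \<beta> j g' = til X j (\<lambda>n x. actG n g (actG n g' x)) ox \<beta>"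
    by (rule til_comp_fun, rule actG_in) (use assms in auto)
  also have "\<dots> = tG \<beta> j (g \<otimes>\<^bsub>G\<^esub> g')"
    by (rule til_cong_fun, rule actG_comp) (use assms in auto)
  finally show ?thesis .
qed

lemma tQ_one: "tQ \<alpha> j \<one>\<^bsub>Q\<^esub> = id"
  by (rule til_id_fun, rule actQ_one) auto
lemma tG_one: "tG \<beta> j \<one>\<^bsub>G\<^esub> = id"
  by (rule til_id_fun, rule actG_one) auto

lemma tQG_commute: assumes "q \<in> carrier Q" "g \<in> carrier G" "\<And>i. i \<ge> j \<Longrightarrow> \<alpha> i \<noteq> \<beta> i"
  shows "tQ \<alpha> j q \<circ> tG \<beta> j g = tG \<beta> j g \<circ> tQ \<alpha> j q"
  by (rule til_commute_fun, rule actQ_in, simp, rule assms, simp, rule actG_in) (use assms in auto)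

lemma tQ_inv: assumes "q \<in> carrier Q" shows "m_inv (autgrp X j) (tQ \<alpha> j q) = tQ \<alpha> j (inv\<^bsub>Q\<^esub> q)"
proof (rule autgrp_inv_eq)
  have iq: "inv\<^bsub>Q\<^esub> q \<in> carrier Q" using assms group.inv_closed[OF grpQ] by blast
  show "tQ \<alpha> j (inv\<^bsub>Q\<^esub> q) \<in> Aut X j" by (rule tQ_Aut[OF iq])
  show "tQ \<alpha> j q \<circ> tQ \<alpha> j (inv\<^bsub>Q\<^esub> q) = id" using tQ_mult[OF assms iq] group.r_inv[OF grpQ assms] tQ_one by simp
  show "tQ \<alpha> j (inv\<^bsub>Q\<^esub> q) \<circ> tQ \<alpha> j q = id" using tQ_mult[OF iq assms] group.l_inv[OF grpQ assms] tQ_one by simp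
qed

lemma tG_inv: assumes "g \<in> carrier G" shows "m_inv (autgrp X j) (tG \<beta> j g) = tG \<beta> j (inv\<^bsub>G\<^esub> g)"
proof (rule autgrp_inv_eq)
  have iq: "inv\<^bsub>G\<^esub> g \<in> carrier G" using assms group.inv_closed[OF grpG] by blast
  show "tG \<beta> j (inv\<^bsub>G\<^esub> g) \<in> Aut X j" by (rule tG_Aut[OF iq])
  show "tG \<beta> j g \<circ> tG \<beta> j (inv\<^bsub>G\<^esub> g) = id" using tG_mult[OF assms iq] group.r_inv[OF grpG assms] tG_one by simp
  show "tG \<beta> j (inv\<^bsub>G\<^esub> g) \<circ> tG \<beta> j g = id" using tG_mult[OF iq assms] group.l_inv[OF grpG assms] tG_one by simp
qed

definition interp :: "(nat \<Rightarrow> 'x) \<Rightarrow> (nat \<Rightarrow> 'x) \<Rightarrow> ('x \<Rightarrow> 'x) + ('q + 'g) \<Rightarrow> 'x list \<Rightarrow> 'x list" where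
  "interp \<alpha> \<beta> l = (case l of Inl a \<Rightarrow> embA X 1 a | Inr (Inl q) \<Rightarrow> tQ \<alpha> 1 q | Inr (Inr g) \<Rightarrow> tG \<beta> 1 g)"

definition V :: "(('x \<Rightarrow> 'x) + ('q + 'g)) set" where
  "V = Inl ` A 1 \<union> Inr ` Inl ` carrier Q \<union> Inr ` Inr ` carrier G"

lemma interp_Aut: "l \<in> V \<Longrightarrow> interp \<alpha> \<beta> l \<in> Aut X 1"
proof -
  assume "l \<in> V"
  then consider (a) a where "a \<in> A 1" "l = Inl a" | (q) q where "q \<in> carrier Q" "l = Inr (Inl q)"
    | (g) g where "g \<in> carrier G" "l = Inr (Inr g)" unfolding V_def by blast
  thus ?thesis
  proof cases
    case a thus ?thesis using A_sub[of 1] embA_Aut[of a X 1] by (auto simp: interp_def)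
  qed (auto simp: interp_def tQ_Aut tG_Aut)
qed

lemma interp_lists_Aut: "ws \<in> lists V \<Longrightarrow> set (map (interp \<alpha> \<beta>) ws) \<subseteq> Aut X 1"
  using interp_Aut by auto

lemma Gam_words:
  assumes "\<gamma> \<in> Gam X actQ actG Q G ox \<alpha> \<beta> 1"
  shows "\<exists>ws \<in> lists V. \<gamma> = foldr (\<circ>) (map (interp \<alpha> \<beta>) ws) id"
  using assms unfolding Gam_def
proof (induction rule: generate.induct)
  case one thus ?case by (intro bexI[of _ "[]"]) (auto simp: autgrp_def)
next
  case (incl h)
  then consider (a) a where "a \<in> A 1" "h = embA X 1 a"
    | (q) q where "q \<in> carrier Q" "h = tQ \<alpha> 1 q" | (g) g where "g \<in> carrier G" "h = tG \<beta> 1 g"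
    by (auto simp: Til_def)
  thus ?case
  proof cases
    case a thus ?thesis by (intro bexI[of _ "[Inl a]"]) (auto simp: interp_def V_def)
  next
    case q thus ?thesis by (intro bexI[of _ "[Inr (Inl q)]"]) (auto simp: interp_def V_def)
  next
    case g thus ?thesis by (intro bexI[of _ "[Inr (Inr g)]"]) (auto simp: interp_def V_def)
  qed
next
  case (inv h)
  then consider (a) a where "a \<in> A 1" "h = embA X 1 a"
    | (q) q where "q \<in> carrier Q" "h = tQ \<alpha> 1 q" | (g) g where "g \<in> carrier G" "h = tG \<beta> 1 g"
    by (auto simp: Til_def)
  thus ?case
  proof cases
    case a
    have "inv\<^bsub>autgrp X 1\<^esub> h = embA X 1 (inv\<^bsub>BijGroup (X 1)\<^esub> a)"
      using a embA_inv A_sub[of 1] by auto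
    thus ?thesis using a inv_A[of 1 a]
      by (intro bexI[of _ "[Inl (inv\<^bsub>BijGroup (X 1)\<^esub> a)]"]) (auto simp: interp_def V_def)
  next
    case q
    have "inv\<^bsub>Q\<^esub> q \<in> carrier Q" using q group.inv_closed[OF grpQ] by blast
    thus ?thesis using q tQ_inv[of q 1 \<alpha>]
      by (intro bexI[of _ "[Inr (Inl (inv\<^bsub>Q\<^esub> q))]"]) (auto simp: interp_def V_def)
  next
    case g
    have "inv\<^bsub>G\<^esub> g \<in> carrier G" using g group.inv_closed[OF grpG] by blast
    thus ?thesis using g tG_inv[of g 1 \<beta>]
      by (intro bexI[of _ "[Inr (Inr (inv\<^bsub>G\<^esub> g))]"]) (auto simp: interp_def V_def)
  qed
next
  case (eng h1 h2)
  then obtain ws1 ws2 where "ws1 \<in> lists V" "ws2 \<in> lists V"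
    "h1 = foldr (\<circ>) (map (interp \<alpha> \<beta>) ws1) id" "h2 = foldr (\<circ>) (map (interp \<alpha> \<beta>) ws2) id" by blast
  have e1: "h1 \<otimes>\<^bsub>autgrp X 1\<^esub> h2 = h1 \<circ> h2" by (simp add: autgrp_def)
  have e2: "foldr (\<circ>) (map (interp \<alpha> \<beta>) (ws1 @ ws2)) id = foldr (\<circ>) (map (interp \<alpha> \<beta>) ws1) id \<circ> foldr (\<circ>) (map (interp \<alpha> \<beta>) ws2) id"
    by (simp only: map_append foldr_comp_append)
  have "h1 \<circ> h2 = foldr (\<circ>) (map (interp \<alpha> \<beta>) (ws1 @ ws2)) id"
    unfolding e2 \<open>h1 = _\<close> \<open>h2 = _\<close> ..
  moreover have "ws1 @ ws2 \<in> lists V" using \<open>ws1 \<in> lists V\<close> \<open>ws2 \<in> lists V\<close> by simp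
  ultimately show ?case unfolding e1 by blast
qed

abbreviation "gam \<alpha> \<beta> ws \<equiv> foldr (\<circ>) (map (interp \<alpha> \<beta>) ws) id"

lemma gam_Aut: "ws \<in> lists V \<Longrightarrow> gam \<alpha> \<beta> ws \<in> Aut X 1"
  by (rule foldr_Aut[OF interp_lists_Aut])

lemma V_drop: "ws \<in> lists V \<Longrightarrow> drop n ws \<in> lists V"
  by (auto dest: in_set_dropD)

lemma finA: "n \<ge> 1 \<Longrightarrow> finite (A n)"
  using A_sub finite_Bij finX finite_subset by metis

lemma ord_le_maxord: assumes "n \<ge> 1" "a \<in> A n"
  shows "group.ord (BijGroup (X n)) a \<le> maxord X actQ actG Q G n"
  unfolding maxord_def using finA[OF assms(1)] assms(2) by (intro Max_ge) auto

lemma orbit_card: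
  assumes n: "n \<ge> 1" and a: "a \<in> A n"
  shows "card (range (\<lambda>r::nat. (a [^]\<^bsub>BijGroup (X n)\<^esub> r) z)) \<le> maxord X actQ actG Q G n"
proof -
  interpret B: group "BijGroup (X n)" by (rule group_BijGroup)
  have fc: "finite (carrier (BijGroup (X n)))" using finite_Bij[OF finX[OF n]] by (simp add: BijGroup_def)
  have ac: "a \<in> carrier (BijGroup (X n))" using A_sub[OF n] a by (auto simp: BijGroup_def)
  have sub: "range (\<lambda>r::nat. (a [^]\<^bsub>BijGroup (X n)\<^esub> r) z) \<subseteq> (\<lambda>x. (a [^]\<^bsub>BijGroup (X n)\<^esub> x) z) ` {0 .. B.ord a - 1}"
  proof
    fix y assume "y \<in> range (\<lambda>r::nat. (a [^]\<^bsub>BijGroup (X n)\<^esub> r) z)"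
    then obtain r :: nat where y: "y = (a [^]\<^bsub>BijGroup (X n)\<^esub> r) z" by (rule rangeE)
    have "a [^]\<^bsub>BijGroup (X n)\<^esub> r \<in> {a [^]\<^bsub>BijGroup (X n)\<^esub> x | x. x \<in> (UNIV :: nat set)}" by blast
    hence "a [^]\<^bsub>BijGroup (X n)\<^esub> r \<in> {a [^]\<^bsub>BijGroup (X n)\<^esub> x | x. x \<in> {0 .. B.ord a - 1}}"
      unfolding B.ord_elems[OF fc ac] .
    then obtain x where "x \<in> {0 .. B.ord a - 1}" "a [^]\<^bsub>BijGroup (X n)\<^esub> r = a [^]\<^bsub>BijGroup (X n)\<^esub> x" by blast
    thus "y \<in> (\<lambda>x. (a [^]\<^bsub>BijGroup (X n)\<^esub> x) z) ` {0 .. B.ord a - 1}" using y by auto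
  qed
  have "card (range (\<lambda>r::nat. (a [^]\<^bsub>BijGroup (X n)\<^esub> r) z)) \<le> card ((\<lambda>x. (a [^]\<^bsub>BijGroup (X n)\<^esub> x) z) ` {0 .. B.ord a - 1})"
    by (rule card_mono[OF _ sub]) simp
  also have "\<dots> \<le> card {0 .. B.ord a - 1}" by (rule card_image_le) simp
  also have "\<dots> = B.ord a" using B.ord_ge_1[OF fc ac] by simp
  also have "\<dots> \<le> maxord X actQ actG Q G n" by (rule ord_le_maxord[OF n a])
  finally show ?thesis .
qed

lemma maxord_ge1: "n \<ge> 1 \<Longrightarrow> maxord X actQ actG Q G n \<ge> 1"
proof -
  assume n: "n \<ge> 1"
  interpret B: group "BijGroup (X n)" by (rule group_BijGroup)
  have fc: "finite (carrier (BijGroup (X n)))" using finite_Bij[OF finX[OF n]] by (simp add: BijGroup_def)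
  have "B.ord \<one>\<^bsub>BijGroup (X n)\<^esub> \<ge> 1" using B.ord_ge_1[OF fc] by simp
  thus ?thesis using ord_le_maxord[OF n one_A] by linarith
qed

lemma letter_local:
  assumes l: "l \<in> V" and u: "wordT X 1 u" "length u = m"
  shows "\<exists>a \<in> A (Suc m). \<forall>z \<in> X (Suc m). interp \<alpha> \<beta> l (u @ [z]) = interp \<alpha> \<beta> l u @ [a z]"
proof -
  have one_z: "\<one>\<^bsub>BijGroup (X (Suc m))\<^esub> z = z" if "z \<in> X (Suc m)" for z using that by (simp add: BijGroup_def)
  have hA: "interp \<alpha> \<beta> l \<in> Aut X 1" by (rule interp_Aut[OF l])
  show ?thesis
  proof (cases "u = []")
    case True
    hence m: "m = 0" using u by simp
    from l consider (a) a where "a \<in> A 1" "l = Inl a" | (q) q where "q \<in> carrier Q" "l = Inr (Inl q)"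
      | (g) g where "g \<in> carrier G" "l = Inr (Inr g)" unfolding V_def by blast
    thus ?thesis
    proof cases
      case a thus ?thesis using True m by (intro bexI[of _ a]) (auto simp: interp_def)
    next
      case q thus ?thesis using True m one_z one_A by (intro bexI[of _ "\<one>\<^bsub>BijGroup (X (Suc m))\<^esub>"]) (auto simp: interp_def til_def)
    next
      case g thus ?thesis using True m one_z one_A by (intro bexI[of _ "\<one>\<^bsub>BijGroup (X (Suc m))\<^esub>"]) (auto simp: interp_def til_def)
    qed
  next
    case False
    have e: "interp \<alpha> \<beta> l (u @ [z]) = interp \<alpha> \<beta> l u @ sect X 1 (interp \<alpha> \<beta> l) u [z]" if z: "z \<in> X (Suc m)" for z
    proof -
      have zw: "wordT X (1 + length u) [z]" using z u by simp
      have uz: "wordT X 1 (u @ [z])" using u zw by (simp add: wordT_append)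
      show ?thesis using Aut_app[OF hA uz] zw by (simp add: sect_def)
    qed
    from l consider (a) a where "a \<in> A 1" "l = Inl a" | (q) q where "q \<in> carrier Q" "l = Inr (Inl q)"
      | (g) g where "g \<in> carrier G" "l = Inr (Inr g)" unfolding V_def by blast
    thus ?thesis
    proof cases
      case a
      have "sect X 1 (interp \<alpha> \<beta> l) u = id" using a sect_embA[OF False u(1)] by (simp add: interp_def)
      thus ?thesis using e one_z one_A by (intro bexI[of _ "\<one>\<^bsub>BijGroup (X (Suc m))\<^esub>"]) auto
    next
      case q
      have s: "sect X 1 (interp \<alpha> \<beta> l) u = (if u = osq ox 1 (length u) then til X (1 + length u) (\<lambda>n. actQ n q) ox \<alpha>
      else if u \<noteq> [] \<and> u = osq ox 1 (length u - 1) @ [\<alpha> (1 + length u - 1)]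
        then embA X (1 + length u) (actQ (1 + length u) q)
      else id)" using q sect_til[OF u(1)] by (simp add: interp_def)
      show ?thesis
      proof (cases "u \<noteq> osq ox 1 (length u) \<and> u \<noteq> [] \<and> u = osq ox 1 (length u - 1) @ [\<alpha> (1 + length u - 1)]")
        case True
        have c1: "(u = osq ox 1 (length u)) = False" using True by simp
        have c2: "(u \<noteq> [] \<and> u = osq ox 1 (length u - 1) @ [\<alpha> (1 + length u - 1)]) = True" using True by simp
        have "sect X 1 (interp \<alpha> \<beta> l) u = embA X (1 + length u) (actQ (1 + length u) q)"
          unfolding s c1 c2 if_False if_True ..
        hence "sect X 1 (interp \<alpha> \<beta> l) u [z] = [actQ (Suc m) q z]" if "z \<in> X (Suc m)" for z using that u by simp
        thus ?thesis using e actQ_A[OF q(1)] by (intro bexI[of _ "actQ (Suc m) q"]) auto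
      next
        case F: False
        have "sect X 1 (interp \<alpha> \<beta> l) u [z] = [z]" if z: "z \<in> X (Suc m)" for z
        proof (cases "u = osq ox 1 (length u)")
          case True
          hence "sect X 1 (interp \<alpha> \<beta> l) u = til X (1 + length u) (\<lambda>n. actQ n q) ox \<alpha>" unfolding s by simp
          thus ?thesis using z u by (simp add: til_def)
        next
          case False
          have c2: "(u \<noteq> [] \<and> u = osq ox 1 (length u - 1) @ [\<alpha> (1 + length u - 1)]) = False" using F False by blast
          have c1: "(u = osq ox 1 (length u)) = False" using False by simp
          have "sect X 1 (interp \<alpha> \<beta> l) u = id" unfolding s c1 c2 if_False ..
          thus ?thesis by simp
        qed
        thus ?thesis using e one_z one_A by (intro bexI[of _ "\<one>\<^bsub>BijGroup (X (Suc m))\<^esub>"]) auto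
      qed
    next
      case g
      have s: "sect X 1 (interp \<alpha> \<beta> l) u = (if u = osq ox 1 (length u) then til X (1 + length u) (\<lambda>n. actG n g) ox \<beta>
      else if u \<noteq> [] \<and> u = osq ox 1 (length u - 1) @ [\<beta> (1 + length u - 1)]
        then embA X (1 + length u) (actG (1 + length u) g)
      else id)" using g sect_til[OF u(1)] by (simp add: interp_def)
      show ?thesis
      proof (cases "u \<noteq> osq ox 1 (length u) \<and> u \<noteq> [] \<and> u = osq ox 1 (length u - 1) @ [\<beta> (1 + length u - 1)]")
        case True
        have c1: "(u = osq ox 1 (length u)) = False" using True by simp
        have c2: "(u \<noteq> [] \<and> u = osq ox 1 (length u - 1) @ [\<beta> (1 + length u - 1)]) = True" using True by simp
        have "sect X 1 (interp \<alpha> \<beta> l) u = embA X (1 + length u) (actG (1 + length u) g)"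
          unfolding s c1 c2 if_False if_True ..
        hence "sect X 1 (interp \<alpha> \<beta> l) u [z] = [actG (Suc m) g z]" if "z \<in> X (Suc m)" for z using that u by simp
        thus ?thesis using e actG_A[OF g(1)] by (intro bexI[of _ "actG (Suc m) g"]) auto
      next
        case F: False
        have "sect X 1 (interp \<alpha> \<beta> l) u [z] = [z]" if z: "z \<in> X (Suc m)" for z
        proof (cases "u = osq ox 1 (length u)")
          case True
          hence "sect X 1 (interp \<alpha> \<beta> l) u = til X (1 + length u) (\<lambda>n. actG n g) ox \<beta>" unfolding s by simp
          thus ?thesis using z u by (simp add: til_def)
        next
          case False
          have c2: "(u \<noteq> [] \<and> u = osq ox 1 (length u - 1) @ [\<beta> (1 + length u - 1)]) = False" using F False by blast
          have c1: "(u = osq ox 1 (length u)) = False" using False by simp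
          have "sect X 1 (interp \<alpha> \<beta> l) u = id" unfolding s c1 c2 if_False ..
          thus ?thesis by simp
        qed
        thus ?thesis using e one_z one_A by (intro bexI[of _ "\<one>\<^bsub>BijGroup (X (Suc m))\<^esub>"]) auto
      qed
    qed
  qed
qed

lemma gam_local:
  assumes ws: "ws \<in> lists V" and u: "wordT X 1 u" "length u = m"
  shows "\<exists>a \<in> A (Suc m). \<forall>z \<in> X (Suc m). gam \<alpha> \<beta> ws (u @ [z]) = gam \<alpha> \<beta> ws u @ [a z]"
  using ws
proof (induction ws)
  case Nil
  have "\<one>\<^bsub>BijGroup (X (Suc m))\<^esub> z = z" if "z \<in> X (Suc m)" for z using that by (simp add: BijGroup_def)
  thus ?case using one_A by (intro bexI[of _ "\<one>\<^bsub>BijGroup (X (Suc m))\<^esub>"]) auto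
next
  case (Cons l ws)
  have l: "l \<in> V" and wsV: "ws \<in> lists V" using Cons by auto
  obtain a' where a': "a' \<in> A (Suc m)" "\<And>z. z \<in> X (Suc m) \<Longrightarrow> gam \<alpha> \<beta> ws (u @ [z]) = gam \<alpha> \<beta> ws u @ [a' z]"
    using Cons.IH by blast
  have gA: "gam \<alpha> \<beta> ws \<in> Aut X 1" by (rule gam_Aut[OF wsV])
  let ?u2 = "gam \<alpha> \<beta> ws u"
  have u2: "wordT X 1 ?u2" "length ?u2 = m" using AutD(1,2)[OF gA u(1)] u(2) by auto
  obtain b where b: "b \<in> A (Suc m)" "\<And>y. y \<in> X (Suc m) \<Longrightarrow> interp \<alpha> \<beta> l (?u2 @ [y]) = interp \<alpha> \<beta> l ?u2 @ [b y]"
    using letter_local[OF l u2] by blast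
  have m1: "Suc m \<ge> 1" by simp
  have a'B: "a' \<in> Bij (X (Suc m))" "b \<in> Bij (X (Suc m))" using A_sub[OF m1] a'(1) b(1) by auto
  show ?case
  proof (intro bexI[of _ "b \<otimes>\<^bsub>BijGroup (X (Suc m))\<^esub> a'"] ballI)
    show "b \<otimes>\<^bsub>BijGroup (X (Suc m))\<^esub> a' \<in> A (Suc m)" by (rule mult_A[OF b(1) a'(1)])
    fix z assume z: "z \<in> X (Suc m)"
    have az: "a' z \<in> X (Suc m)" by (rule Bij_in[OF a'B(1) z])
    have "gam \<alpha> \<beta> (l # ws) (u @ [z]) = interp \<alpha> \<beta> l (gam \<alpha> \<beta> ws (u @ [z]))" by simp
    also have "\<dots> = interp \<alpha> \<beta> l (?u2 @ [a' z])" using a'(2)[OF z] by simp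
    also have "\<dots> = interp \<alpha> \<beta> l ?u2 @ [b (a' z)]" by (rule b(2)[OF az])
    also have "b (a' z) = (b \<otimes>\<^bsub>BijGroup (X (Suc m))\<^esub> a') z" using mult_Bij_apply[OF a'B(2) a'B(1) z] by simp
    finally show "gam \<alpha> \<beta> (l # ws) (u @ [z]) = gam \<alpha> \<beta> (l # ws) u @ [(b \<otimes>\<^bsub>BijGroup (X (Suc m))\<^esub> a') z]" by (simp add: nf)
  qed
qed

lemma funpow_app_add: "(f ^^ (m + n)) x = (f ^^ m) ((f ^^ n) x)"
  by (simp add: funpow_add)

lemma orbit_fibre_card:
  assumes ws: "ws \<in> lists V" and c: "c \<in> Aut X 1" and w: "wordT X 1 w" "length w = Suc m"
  shows "card {x. \<exists>t. c ((gam \<alpha> \<beta> ws ^^ t) w) = osq ox 1 m @ [x]} \<le> maxord X actQ actG Q G (Suc m)"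
proof -
  let ?g = "gam \<alpha> \<beta> ws"
  let ?S = "{x. \<exists>t. c ((?g ^^ t) w) = osq ox 1 m @ [x]}"
  have gA: "?g \<in> Aut X 1" by (rule gam_Aut[OF ws])
  have gnA: "?g ^^ n \<in> Aut X 1" for n by (rule funpow_Aut[OF gA])
  have fin1: "\<And>i. i \<ge> 1 \<Longrightarrow> finite (X i)" by (rule finX)
  have m1: "Suc m \<ge> 1" by simp
  show ?thesis
  proof (cases "?S = {}")
    case True thus ?thesis by simp
  next
    case False
    then obtain x0 t0 where x0: "c ((?g ^^ t0) w) = osq ox 1 m @ [x0]" by blast
    define y0 where "y0 = (?g ^^ t0) w"
    have y0w: "wordT X 1 y0" "length y0 = Suc m" using AutD(1,2)[OF gnA w(1)] w(2) by (auto simp: y0_def)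
    define u where "u = take m y0"
    define z0 where "z0 = y0 ! m"
    have y0u: "y0 = u @ [z0]" unfolding u_def z0_def using take_snoc_nth[OF y0w(2)] .
    have ul: "length u = m" using y0w(2) by (simp add: u_def)
    have uw: "wordT X 1 u" and z0X: "z0 \<in> X (Suc m)"
      using y0w(1) ul unfolding y0u by (auto simp: wordT_append)
    have cu: "c u = osq ox 1 m"
    proof -
      have uzw: "wordT X 1 (u @ [z0])" using y0w(1) y0u by simp
      have "take (length u) (c (u @ [z0])) = c u" by (rule AutD(3)[OF c uzw])
      moreover have "c (u @ [z0]) = osq ox 1 m @ [x0]" using x0 y0u y0_def by simp
      ultimately show ?thesis using ul by simp
    qed
    define L where "L = orblen ?g u"
    have L: "L > 0" "(?g ^^ L) u = u" "\<And>n. 0 < n \<Longrightarrow> n < L \<Longrightarrow> (?g ^^ n) u \<noteq> u"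
      using orblen[OF gA uw fin1] unfolding L_def by auto
    have e0: "concat (replicate L (map (interp \<alpha> \<beta>) ws)) = map (interp \<alpha> \<beta>) (concat (replicate L ws))"
      by (induction L) auto
    have e: "?g ^^ L = gam \<alpha> \<beta> (concat (replicate L ws))" unfolding funpow_foldr e0 ..
    have wsL: "concat (replicate L ws) \<in> lists V" using ws by (induction L) auto
    obtain a where a: "a \<in> A (Suc m)" "\<And>z. z \<in> X (Suc m) \<Longrightarrow> (?g ^^ L) (u @ [z]) = u @ [a z]"
    proof -
      obtain a where "a \<in> A (Suc m)" "\<forall>z\<in>X (Suc m). gam \<alpha> \<beta> (concat (replicate L ws)) (u @ [z]) = gam \<alpha> \<beta> (concat (replicate L ws)) u @ [a z]"
        using gam_local[OF wsL uw ul] by blast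
      thus ?thesis using that L(2) unfolding e[symmetric] by auto
    qed
    have aC: "a \<in> carrier (BijGroup (X (Suc m)))" using A_sub[OF m1] a(1) by (auto simp: BijGroup_def)
    have it: "((?g ^^ L) ^^ r) (u @ [z]) = u @ [(a [^]\<^bsub>BijGroup (X (Suc m))\<^esub> r) z]" if "z \<in> X (Suc m)" for r z
      by (rule iterate_local[OF L(2) aC a(2) that])
    define p where "p = orblen ?g w"
    have p: "p > 0" "(?g ^^ p) w = w" using orblen[OF gA w(1) fin1] unfolding p_def by auto
    have sub: "?S \<subseteq> (\<lambda>z. last (c (u @ [z]))) ` range (\<lambda>r::nat. (a [^]\<^bsub>BijGroup (X (Suc m))\<^esub> r) z0)"
    proof
      fix x assume "x \<in> ?S"
      then obtain t where ct: "c ((?g ^^ t) w) = osq ox 1 m @ [x]" by blast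
      define s where "s = t + p * t0 - t0"
      have "p * t0 \<ge> t0" using p(1) by simp
      hence st: "s + t0 = t + p * t0" unfolding s_def by linarith
      have "(?g ^^ s) y0 = (?g ^^ (s + t0)) w" unfolding y0_def by (simp add: funpow_app_add)
      also have "\<dots> = (?g ^^ t) ((?g ^^ (p * t0)) w)" unfolding st by (simp add: funpow_app_add)
      also have "(?g ^^ (p * t0)) w = w" by (rule funpow_period[OF p(2)])
      finally have yt: "(?g ^^ t) w = (?g ^^ s) y0" by (rule sym)
      define yt where "yt = (?g ^^ s) y0"
      have ytw: "wordT X 1 yt" "length yt = Suc m" using AutD(1,2)[OF gnA y0w(1)] y0w(2) by (auto simp: yt_def)
      have uzw: "wordT X 1 (u @ [z0])" using y0w(1) y0u by simp
      have t1: "take m yt = (?g ^^ s) u"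
        using AutD(3)[OF gnA uzw] ul y0u by (simp add: yt_def)
      define u' where "u' = take m yt"
      define z' where "z' = yt ! m"
      have ytu: "yt = u' @ [z']" unfolding u'_def z'_def by (rule take_snoc_nth[OF ytw(2)])
      have u'l: "length u' = m" using ytw(2) by (simp add: u'_def)
      have uzw': "wordT X 1 (u' @ [z'])" using ytw(1) ytu by simp
      have t2: "c u' = osq ox 1 m"
      proof -
        have "take (length u') (c (u' @ [z'])) = c u'" by (rule AutD(3)[OF c uzw'])
        moreover have "c (u' @ [z']) = osq ox 1 m @ [x]" using ct yt ytu by (simp add: yt_def)
        ultimately show ?thesis using u'l by simp
      qed
      have "c u' = c u" using t2 cu by simp
      hence "u' = u" by (rule injD[OF Aut_inj[OF c]])
      hence su: "(?g ^^ s) u = u" using t1 by (simp add: u'_def)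
      have smod: "s mod L = 0"
      proof (rule ccontr)
        assume "s mod L \<noteq> 0"
        moreover have "(?g ^^ (s mod L)) u = u" using funpow_mod[OF L(2), of s] su by simp
        ultimately show False using L(3)[of "s mod L"] L(1) by simp
      qed
      define r where "r = s div L"
      have "s = L * r" using smod unfolding r_def by (metis mult_div_mod_eq add_0_right)
      hence "yt = ((?g ^^ L) ^^ r) (u @ [z0])" using y0u by (simp add: funpow_mult yt_def)
      also have "\<dots> = u @ [(a [^]\<^bsub>BijGroup (X (Suc m))\<^esub> r) z0]" by (rule it[OF z0X])
      finally have "c (u @ [(a [^]\<^bsub>BijGroup (X (Suc m))\<^esub> r) z0]) = osq ox 1 m @ [x]" using ct yt by (simp add: yt_def)
      hence "x = last (c (u @ [(a [^]\<^bsub>BijGroup (X (Suc m))\<^esub> r) z0]))" by simp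
      thus "x \<in> (\<lambda>z. last (c (u @ [z]))) ` range (\<lambda>r::nat. (a [^]\<^bsub>BijGroup (X (Suc m))\<^esub> r) z0)" by blast
    qed
    have finR: "finite (range (\<lambda>r::nat. (a [^]\<^bsub>BijGroup (X (Suc m))\<^esub> r) z0))"
    proof (rule finite_subset[OF _ finX[OF m1]])
      interpret B: group "BijGroup (X (Suc m))" by (rule group_BijGroup)
      show "range (\<lambda>r::nat. (a [^]\<^bsub>BijGroup (X (Suc m))\<^esub> r) z0) \<subseteq> X (Suc m)"
      proof
        fix y assume "y \<in> range (\<lambda>r::nat. (a [^]\<^bsub>BijGroup (X (Suc m))\<^esub> r) z0)"
        then obtain r :: nat where y: "y = (a [^]\<^bsub>BijGroup (X (Suc m))\<^esub> r) z0" by (rule rangeE)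
        have "a [^]\<^bsub>BijGroup (X (Suc m))\<^esub> r \<in> Bij (X (Suc m))" using B.nat_pow_closed[OF aC] by (simp add: BijGroup_def)
        thus "y \<in> X (Suc m)" using y z0X by (simp add: Bij_in)
      qed
    qed
    have "card ?S \<le> card ((\<lambda>z. last (c (u @ [z]))) ` range (\<lambda>r::nat. (a [^]\<^bsub>BijGroup (X (Suc m))\<^esub> r) z0))"
      by (rule card_mono[OF _ sub]) (use finR in simp)
    also have "\<dots> \<le> card (range (\<lambda>r::nat. (a [^]\<^bsub>BijGroup (X (Suc m))\<^esub> r) z0))" by (rule card_image_le[OF finR])
    also have "\<dots> \<le> maxord X actQ actG Q G (Suc m)" by (rule orbit_card[OF m1 a(1)])
    finally show ?thesis .
  qed
qed

definition Bad :: "nat \<Rightarrow> (nat \<Rightarrow> 'x) \<Rightarrow> (nat \<Rightarrow> 'x) \<Rightarrow> (('x \<Rightarrow> 'x) + ('q + 'g)) list \<Rightarrow> 'x set" where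
  "Bad k \<alpha> \<beta> ws = {x. \<exists>i<length ws. \<exists>i'<length ws. \<exists>w t. wordT X 1 w \<and> length w = k \<and>
     gam \<alpha> \<beta> (drop (Suc i) ws) w = osq ox 1 k \<and>
     gam \<alpha> \<beta> (drop (Suc i') ws) ((gam \<alpha> \<beta> ws ^^ t) w) = osq ox 1 (k - 1) @ [x]}"

lemma Bad_sub: assumes ws: "ws \<in> lists V" shows "Bad (Suc m) \<alpha> \<beta> ws \<subseteq> X (Suc m)"
proof
  fix x assume "x \<in> Bad (Suc m) \<alpha> \<beta> ws"
  then obtain i' w t where i': "i' < length ws" and w: "wordT X 1 w" "length w = Suc m"
    and e: "gam \<alpha> \<beta> (drop (Suc i') ws) ((gam \<alpha> \<beta> ws ^^ t) w) = osq ox 1 m @ [x]"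
    unfolding Bad_def by auto
  have cA: "gam \<alpha> \<beta> (drop (Suc i') ws) \<in> Aut X 1" by (rule gam_Aut[OF V_drop[OF ws]])
  have "wordT X 1 ((gam \<alpha> \<beta> ws ^^ t) w)" using AutD(1)[OF funpow_Aut[OF gam_Aut[OF ws]] w(1)] .
  hence "wordT X 1 (gam \<alpha> \<beta> (drop (Suc i') ws) ((gam \<alpha> \<beta> ws ^^ t) w))" by (rule AutD(1)[OF cA])
  hence "wordT X 1 (osq ox 1 m @ [x])" unfolding e .
  thus "x \<in> X (Suc m)" by (simp add: wordT_append)
qed

lemma Bad_card:
  assumes ws: "ws \<in> lists V"
  shows "card (Bad (Suc m) \<alpha> \<beta> ws) \<le> length ws * length ws * maxord X actQ actG Q G (Suc m)"
proof -
  let ?n = "length ws"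
  define B where "B i i' = {x. \<exists>w t. wordT X 1 w \<and> length w = Suc m \<and>
     gam \<alpha> \<beta> (drop (Suc i) ws) w = osq ox 1 (Suc m) \<and>
     gam \<alpha> \<beta> (drop (Suc i') ws) ((gam \<alpha> \<beta> ws ^^ t) w) = osq ox 1 m @ [x]}" for i i'
  have mem: "x \<in> Bad (Suc m) \<alpha> \<beta> ws \<longleftrightarrow> (\<exists>i<?n. \<exists>i'<?n. x \<in> B i i')" for x
    unfolding Bad_def B_def by simp
  have eq: "Bad (Suc m) \<alpha> \<beta> ws = (\<Union>i\<in>{..<?n}. \<Union>i'\<in>{..<?n}. B i i')"
  proof (rule Set.set_eqI)
    fix x show "x \<in> Bad (Suc m) \<alpha> \<beta> ws \<longleftrightarrow> x \<in> (\<Union>i\<in>{..<?n}. \<Union>i'\<in>{..<?n}. B i i')"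
      unfolding mem UN_iff lessThan_iff Bex_def ..
  qed
  have cB: "card (B i i') \<le> maxord X actQ actG Q G (Suc m)" if "i < ?n" "i' < ?n" for i i'
  proof (cases "B i i' = {}")
    case True thus ?thesis by simp
  next
    case False
    then obtain w0 where w0: "wordT X 1 w0" "length w0 = Suc m" "gam \<alpha> \<beta> (drop (Suc i) ws) w0 = osq ox 1 (Suc m)"
      unfolding B_def by blast
    have ci: "gam \<alpha> \<beta> (drop (Suc i) ws) \<in> Aut X 1" by (rule gam_Aut[OF V_drop[OF ws]])
    have ci': "gam \<alpha> \<beta> (drop (Suc i') ws) \<in> Aut X 1" by (rule gam_Aut[OF V_drop[OF ws]])
    let ?T = "{x. \<exists>t. gam \<alpha> \<beta> (drop (Suc i') ws) ((gam \<alpha> \<beta> ws ^^ t) w0) = osq ox 1 m @ [x]}"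
    have sub: "B i i' \<subseteq> ?T"
    proof
      fix x assume "x \<in> B i i'"
      then obtain w t where w: "gam \<alpha> \<beta> (drop (Suc i) ws) w = osq ox 1 (Suc m)"
        "gam \<alpha> \<beta> (drop (Suc i') ws) ((gam \<alpha> \<beta> ws ^^ t) w) = osq ox 1 m @ [x]"
        unfolding B_def by blast
      have "gam \<alpha> \<beta> (drop (Suc i) ws) w = gam \<alpha> \<beta> (drop (Suc i) ws) w0" using w(1) w0(3) by simp
      hence "w = w0" by (rule injD[OF Aut_inj[OF ci]])
      thus "x \<in> ?T" using w(2) by blast
    qed
    have Tsub: "?T \<subseteq> X (Suc m)"
    proof
      fix x assume "x \<in> ?T"
      then obtain t where e: "gam \<alpha> \<beta> (drop (Suc i') ws) ((gam \<alpha> \<beta> ws ^^ t) w0) = osq ox 1 m @ [x]" by blast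
      have "wordT X 1 ((gam \<alpha> \<beta> ws ^^ t) w0)" using AutD(1)[OF funpow_Aut[OF gam_Aut[OF ws]] w0(1)] .
      hence "wordT X 1 (gam \<alpha> \<beta> (drop (Suc i') ws) ((gam \<alpha> \<beta> ws ^^ t) w0))" by (rule AutD(1)[OF ci'])
      hence "wordT X 1 (osq ox 1 m @ [x])" unfolding e .
      thus "x \<in> X (Suc m)" by (simp add: wordT_append)
    qed
    have "card (B i i') \<le> card ?T" by (rule card_mono[OF finite_subset[OF Tsub finX] sub]) simp
    also have "\<dots> \<le> maxord X actQ actG Q G (Suc m)" by (rule orbit_fibre_card[OF ws ci' w0(1,2)])
    finally show ?thesis .
  qed
  have "card (Bad (Suc m) \<alpha> \<beta> ws) \<le> (\<Sum>i\<in>{..<?n}. card (\<Union>i'\<in>{..<?n}. B i i'))"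
    unfolding eq by (rule card_UN_le) simp
  also have "\<dots> \<le> (\<Sum>i\<in>{..<?n}. (\<Sum>i'\<in>{..<?n}. card (B i i')))"
    by (rule sum_mono) (rule card_UN_le, simp)
  also have "\<dots> \<le> (\<Sum>i\<in>{..<?n}. (\<Sum>i'\<in>{..<?n}. maxord X actQ actG Q G (Suc m)))"
    by (intro sum_mono) (use cB in auto)
  also have "\<dots> = ?n * ?n * maxord X actQ actG Q G (Suc m)" by simp
  finally show ?thesis .
qed

lemma sect_til_S:
  assumes pw: "wordT X 1 p" and pl: "length p = Suc m"
  shows "sect X 1 (til X 1 f ox \<alpha>) p = (if p = osq ox 1 (Suc m) then til X (Suc (Suc m)) f ox \<alpha>
     else if p = osq ox 1 m @ [\<alpha> (Suc m)] then embA X (Suc (Suc m)) (f (Suc (Suc m))) else id)"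
  using sect_til[OF pw, of f ox \<alpha>] pl by simp

lemma sect_letter_A:
  assumes l: "l \<in> V" and pw: "wordT X 1 p" and pl: "length p = Suc m" and np: "p \<noteq> osq ox 1 (Suc m)"
  shows "sect X 1 (interp \<alpha> \<beta> l) p \<in> embA X (Suc (Suc m)) ` A (Suc (Suc m))"
proof -
  have idA: "id \<in> embA X (Suc (Suc m)) ` A (Suc (Suc m))"
    using one_A embA_one by (metis image_eqI)
  have pne: "p \<noteq> []" using pl by auto
  from l consider (a) a where "a \<in> A 1" "l = Inl a" | (q) q where "q \<in> carrier Q" "l = Inr (Inl q)"
      | (g) g where "g \<in> carrier G" "l = Inr (Inr g)" unfolding V_def by blast
  thus ?thesis
  proof cases
    case a
    have "sect X 1 (interp \<alpha> \<beta> l) p = id" using a sect_embA[OF pne pw] by (simp add: interp_def)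
    thus ?thesis using idA by simp
  next
    case q
    have c1: "(p = osq ox 1 (Suc m)) = False" using np by simp
    have s: "sect X 1 (interp \<alpha> \<beta> l) p = (if p = osq ox 1 m @ [\<alpha> (Suc m)] then embA X (Suc (Suc m)) (actQ (Suc (Suc m)) q) else id)"
      using q sect_til_S[OF pw pl, of "\<lambda>n. actQ n q" \<alpha>] unfolding c1 if_False by (simp add: interp_def)
    thus ?thesis using idA actQ_A[OF q(1)] by (auto split: if_splits)
  next
    case g
    have c1: "(p = osq ox 1 (Suc m)) = False" using np by simp
    have s: "sect X 1 (interp \<alpha> \<beta> l) p = (if p = osq ox 1 m @ [\<beta> (Suc m)] then embA X (Suc (Suc m)) (actG (Suc (Suc m)) g) else id)"
      using g sect_til_S[OF pw pl, of "\<lambda>n. actG n g" \<beta>] unfolding c1 if_False by (simp add: interp_def)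
    thus ?thesis using idA actG_A[OF g(1)] by (auto split: if_splits)
  qed
qed

lemma sect_letter_B:
  assumes l: "l \<in> V" and pw: "wordT X 1 p" and pl: "length p = Suc m"
    and na: "p \<noteq> osq ox 1 m @ [\<alpha> (Suc m)]" and nb: "p \<noteq> osq ox 1 m @ [\<beta> (Suc m)]"
  shows "sect X 1 (interp \<alpha> \<beta> l) p \<in> Til X actQ Q ox \<alpha> (Suc (Suc m)) \<union> Til X actG G ox \<beta> (Suc (Suc m)) \<union> {id}"
proof -
  have pne: "p \<noteq> []" using pl by auto
  from l consider (a) a where "a \<in> A 1" "l = Inl a" | (q) q where "q \<in> carrier Q" "l = Inr (Inl q)"
      | (g) g where "g \<in> carrier G" "l = Inr (Inr g)" unfolding V_def by blast
  thus ?thesis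
  proof cases
    case a
    have "sect X 1 (interp \<alpha> \<beta> l) p = id" using a sect_embA[OF pne pw] by (simp add: interp_def)
    thus ?thesis by simp
  next
    case q
    have c2: "(p = osq ox 1 m @ [\<alpha> (Suc m)]) = False" using na by simp
    have s: "sect X 1 (interp \<alpha> \<beta> l) p = (if p = osq ox 1 (Suc m) then tQ \<alpha> (Suc (Suc m)) q else id)"
      using q sect_til_S[OF pw pl, of "\<lambda>n. actQ n q" \<alpha>] unfolding c2 if_False by (simp add: interp_def)
    thus ?thesis using q(1) by (auto simp: Til_def split: if_splits)
  next
    case g
    have c2: "(p = osq ox 1 m @ [\<beta> (Suc m)]) = False" using nb by simp
    have s: "sect X 1 (interp \<alpha> \<beta> l) p = (if p = osq ox 1 (Suc m) then tG \<beta> (Suc (Suc m)) g else id)"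
      using g sect_til_S[OF pw pl, of "\<lambda>n. actG n g" \<beta>] unfolding c2 if_False by (simp add: interp_def)
    thus ?thesis using g(1) by (auto simp: Til_def split: if_splits)
  qed
qed

lemma foldr_embA:
  assumes n: "n \<ge> 1" and S: "set Ss \<subseteq> embA X n ` A n"
  shows "foldr (\<circ>) Ss id \<in> embA X n ` A n"
  using S
proof (induction Ss)
  case Nil
  have "foldr (\<circ>) [] id = embA X n \<one>\<^bsub>BijGroup (X n)\<^esub>" by (simp add: embA_one)
  thus ?case using one_A by (metis image_eqI)
next
  case (Cons s Ss)
  have "set Ss \<subseteq> embA X n ` A n" using Cons.prems by simp
  hence "foldr (\<circ>) Ss id \<in> embA X n ` A n" by (rule Cons.IH)
  then obtain b where b: "b \<in> A n" "foldr (\<circ>) Ss id = embA X n b" by (metis imageE)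
  obtain a where a: "a \<in> A n" "s = embA X n a" using Cons.prems by auto
  have "foldr (\<circ>) (s # Ss) id = embA X n a \<circ> embA X n b" using a b by simp
  also have "\<dots> = embA X n (a \<otimes>\<^bsub>BijGroup (X n)\<^esub> b)" using embA_mult A_sub[OF n] a b by blast
  finally show ?case using mult_A[OF a(1) b(1)] by (metis image_eqI)
qed

lemma foldr_Btil:
  assumes S: "set Ss \<subseteq> Til X actQ Q ox \<alpha> n \<union> Til X actG G ox \<beta> n \<union> {id}"
    and ab: "\<And>i. i \<ge> n \<Longrightarrow> \<alpha> i \<noteq> \<beta> i"
  shows "foldr (\<circ>) Ss id \<in> Btil X actQ actG Q G ox \<alpha> \<beta> n"
  using S
proof (induction Ss)
  case Nil
  have "foldr (\<circ>) [] id = tQ \<alpha> n \<one>\<^bsub>Q\<^esub> \<circ> tG \<beta> n \<one>\<^bsub>G\<^esub>" by (simp add: tQ_one tG_one)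
  thus ?case using monoid.one_closed[OF group.is_monoid[OF grpQ]] monoid.one_closed[OF group.is_monoid[OF grpG]] unfolding Btil_def Til_def by blast
next
  case (Cons s Ss)
  obtain q g where qg: "q \<in> carrier Q" "g \<in> carrier G" "foldr (\<circ>) Ss id = tQ \<alpha> n q \<circ> tG \<beta> n g"
  proof -
    have "set Ss \<subseteq> Til X actQ Q ox \<alpha> n \<union> Til X actG G ox \<beta> n \<union> {id}" using Cons.prems by (simp add: nf)
    hence "foldr (\<circ>) Ss id \<in> Btil X actQ actG Q G ox \<alpha> \<beta> n" by (rule Cons.IH)
    thus ?thesis using that unfolding Btil_def Til_def by blast
  qed
  have e: "foldr (\<circ>) (s # Ss) id = s \<circ> (tQ \<alpha> n q \<circ> tG \<beta> n g)" using qg(3) by simp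
  have "s \<in> Til X actQ Q ox \<alpha> n \<union> Til X actG G ox \<beta> n \<union> {id}" using Cons.prems by (auto simp: nf)
  then consider (q) q' where "q' \<in> carrier Q" "s = tQ \<alpha> n q'" | (g) g' where "g' \<in> carrier G" "s = tG \<beta> n g'"
    | (i) "s = id" unfolding Til_def by blast
  thus ?case
  proof cases
    case q
    have "s \<circ> (tQ \<alpha> n q \<circ> tG \<beta> n g) = (tQ \<alpha> n q' \<circ> tQ \<alpha> n q) \<circ> tG \<beta> n g" using q by (simp add: comp_assoc)
    also have "\<dots> = tQ \<alpha> n (q' \<otimes>\<^bsub>Q\<^esub> q) \<circ> tG \<beta> n g" using tQ_mult[OF q(1) qg(1)] by simp
    finally show ?thesis unfolding e Btil_def Til_def using monoid.m_closed[OF group.is_monoid[OF grpQ] q(1) qg(1)] qg(2) by blast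
  next
    case g
    have "s \<circ> (tQ \<alpha> n q \<circ> tG \<beta> n g) = (tG \<beta> n g' \<circ> tQ \<alpha> n q) \<circ> tG \<beta> n g" using g by (simp add: comp_assoc)
    also have "\<dots> = (tQ \<alpha> n q \<circ> tG \<beta> n g') \<circ> tG \<beta> n g" using tQG_commute[OF qg(1) g(1) ab] by simp
    also have "\<dots> = tQ \<alpha> n q \<circ> (tG \<beta> n g' \<circ> tG \<beta> n g)" by (simp add: comp_assoc)
    also have "\<dots> = tQ \<alpha> n q \<circ> tG \<beta> n (g' \<otimes>\<^bsub>G\<^esub> g)" using tG_mult[OF g(1) qg(2)] by simp
    finally show ?thesis unfolding e Btil_def Til_def using monoid.m_closed[OF group.is_monoid[OF grpG] g(1) qg(2)] qg(1) by blast
  next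
    case i
    have "foldr (\<circ>) (s # Ss) id = tQ \<alpha> n q \<circ> tG \<beta> n g" unfolding e unfolding i id_comp ..
    thus ?thesis unfolding Btil_def Til_def using qg(1,2) by blast
  qed
qed

lemma nice:
  assumes ws: "ws \<in> lists V" and vw: "wordT X 1 v" "length v = Suc m"
    and na: "\<alpha> (Suc m) \<notin> Bad (Suc m) \<alpha> \<beta> ws" and nb: "\<beta> (Suc m) \<notin> Bad (Suc m) \<alpha> \<beta> ws"
    and ab: "\<And>i. i \<ge> 1 \<Longrightarrow> \<alpha> i \<noteq> \<beta> i"
  shows "stsect X 1 (gam \<alpha> \<beta> ws) v \<in> Btil X actQ actG Q G ox \<alpha> \<beta> (Suc (Suc m)) \<union> embA X (Suc (Suc m)) ` A (Suc (Suc m))"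
proof -
  let ?g = "gam \<alpha> \<beta> ws"
  let ?M = "map (interp \<alpha> \<beta>) ws"
  define l where "l = orblen ?g v"
  have gA: "?g \<in> Aut X 1" by (rule gam_Aut[OF ws])
  have gnA: "?g ^^ n \<in> Aut X 1" for n by (rule funpow_Aut[OF gA])
  have l: "l > 0" "(?g ^^ l) v = v" using orblen[OF gA vw(1) finX] unfolding l_def by auto
  have MA: "set ?M \<subseteq> Aut X 1" by (rule interp_lists_Aut[OF ws])
  have NA: "set (concat (replicate l ?M)) \<subseteq> Aut X 1" using MA by auto
  have st: "stsect X 1 ?g v = foldr (\<circ>) (secl X (concat (replicate l ?M)) v) id"
    unfolding stsect_def l_def[symmetric] funpow_foldr by (rule sect_foldr[OF NA vw(1)])
  let ?pt = "\<lambda>j t. gam \<alpha> \<beta> (drop (Suc j) ws) ((?g ^^ t) v)"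
  have secP: "\<exists>j<length ws. \<exists>t. s = sect X 1 (interp \<alpha> \<beta> (ws ! j)) (?pt j t)"
    if s_in: "s \<in> set (secl X (concat (replicate l ?M)) v)" for s
  proof -
    obtain j t where "j < length ?M" "s = sect X 1 (?M ! j) (foldr (\<circ>) (drop (Suc j) ?M) id ((foldr (\<circ>) ?M id ^^ t) v))"
      using secl_rep[OF s_in] by blast
    thus ?thesis unfolding drop_map by auto
  qed
  have ptw: "wordT X 1 (?pt j t) \<and> length (?pt j t) = Suc m" for j t
  proof -
    have "wordT X 1 ((?g ^^ t) v) \<and> length ((?g ^^ t) v) = Suc m" using AutD(1,2)[OF gnA vw(1)] vw(2) by simp
    thus ?thesis using AutD(1,2)[OF gam_Aut[OF V_drop[OF ws]]] by auto
  qed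
  have wsj: "ws ! j \<in> V" if "j < length ws" for j using ws that by auto
  show ?thesis
  proof (cases "\<forall>j<length ws. \<forall>t. ?pt j t \<noteq> osq ox 1 (Suc m)")
    case True
    have "set (secl X (concat (replicate l ?M)) v) \<subseteq> embA X (Suc (Suc m)) ` A (Suc (Suc m))"
    proof
      fix s assume "s \<in> set (secl X (concat (replicate l ?M)) v)"
      then obtain j t where jt: "j < length ws" "s = sect X 1 (interp \<alpha> \<beta> (ws ! j)) (?pt j t)" using secP by blast
      show "s \<in> embA X (Suc (Suc m)) ` A (Suc (Suc m))" unfolding jt(2)
        by (rule sect_letter_A[OF wsj[OF jt(1)]]) (use ptw True jt(1) in auto)
    qed
    thus ?thesis unfolding st using foldr_embA by simp
  next
    case F1: False
    then obtain j1 t1 where j1: "j1 < length ws" "?pt j1 t1 = osq ox 1 (Suc m)" by blast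
    show ?thesis
    proof (cases "\<forall>j<length ws. \<forall>t. ?pt j t \<noteq> osq ox 1 m @ [\<alpha> (Suc m)] \<and> ?pt j t \<noteq> osq ox 1 m @ [\<beta> (Suc m)]")
      case True
      have "set (secl X (concat (replicate l ?M)) v) \<subseteq> Til X actQ Q ox \<alpha> (Suc (Suc m)) \<union> Til X actG G ox \<beta> (Suc (Suc m)) \<union> {id}"
      proof
        fix s assume "s \<in> set (secl X (concat (replicate l ?M)) v)"
        then obtain j t where jt: "j < length ws" "s = sect X 1 (interp \<alpha> \<beta> (ws ! j)) (?pt j t)" using secP by blast
        show "s \<in> Til X actQ Q ox \<alpha> (Suc (Suc m)) \<union> Til X actG G ox \<beta> (Suc (Suc m)) \<union> {id}" unfolding jt(2)
          by (rule sect_letter_B[OF wsj[OF jt(1)]]) (use ptw True jt(1) in auto)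
      qed
      hence "foldr (\<circ>) (secl X (concat (replicate l ?M)) v) id \<in> Btil X actQ actG Q G ox \<alpha> \<beta> (Suc (Suc m))"
        by (rule foldr_Btil) (use ab in auto)
      thus ?thesis unfolding st by simp
    next
      case F2: False
      then obtain j2 t2 where j2: "j2 < length ws" "?pt j2 t2 = osq ox 1 m @ [\<alpha> (Suc m)] \<or> ?pt j2 t2 = osq ox 1 m @ [\<beta> (Suc m)]"
        by blast
      define w where "w = (?g ^^ t1) v"
      define t where "t = t2 + l * t1 - t1"
      have "l * t1 \<ge> t1" using l(1) by simp
      hence tt: "t + t1 = t2 + l * t1" unfolding t_def by linarith
      have "(?g ^^ t) w = (?g ^^ (t + t1)) v" unfolding w_def by (simp add: funpow_app_add)
      also have "\<dots> = (?g ^^ t2) ((?g ^^ (l * t1)) v)" unfolding tt by (simp add: funpow_app_add)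
      also have "(?g ^^ (l * t1)) v = v" by (rule funpow_period[OF l(2)])
      finally have tw: "(?g ^^ t) w = (?g ^^ t2) v" .
      have ww: "wordT X 1 w" "length w = Suc m" using AutD(1,2)[OF gnA vw(1)] vw(2) by (auto simp: w_def)
      have e1: "gam \<alpha> \<beta> (drop (Suc j1) ws) w = osq ox 1 (Suc m)" using j1(2) by (simp add: w_def)
      have e2: "gam \<alpha> \<beta> (drop (Suc j2) ws) ((?g ^^ t) w) = osq ox 1 (Suc m - 1) @ [\<alpha> (Suc m)] \<or>
                gam \<alpha> \<beta> (drop (Suc j2) ws) ((?g ^^ t) w) = osq ox 1 (Suc m - 1) @ [\<beta> (Suc m)]"
        using j2(2) unfolding tw by simp
      have "\<alpha> (Suc m) \<in> Bad (Suc m) \<alpha> \<beta> ws \<or> \<beta> (Suc m) \<in> Bad (Suc m) \<alpha> \<beta> ws"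
        unfolding Bad_def mem_Collect_eq using j1(1) j2(1) ww e1 e2 by blast
      thus ?thesis using na nb by blast
    qed
  qed
qed

lemma interp_len: "l \<in> V \<Longrightarrow> length (interp \<alpha> \<beta> l w) = length w"
  using AutD(2,5)[OF interp_Aut] by (cases "wordT X 1 w") auto

lemma gam_len: "ws \<in> lists V \<Longrightarrow> length (gam \<alpha> \<beta> ws w) = length w"
  by (induction ws arbitrary: w rule: lists.induct) (auto simp: interp_len)

lemma interp_dep:
  assumes "\<And>i. 1 \<le> i \<Longrightarrow> i \<le> m \<Longrightarrow> \<alpha> i = \<alpha>' i \<and> \<beta> i = \<beta>' i" "length w = Suc m"
  shows "interp \<alpha> \<beta> l w = interp \<alpha>' \<beta>' l w"
proof -
  have a: "tilraw f ox \<alpha> 1 w = tilraw f ox \<alpha>' 1 w" for f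
    by (rule tilraw_dep) (use assms in auto)
  have b: "tilraw f ox \<beta> 1 w = tilraw f ox \<beta>' 1 w" for f
    by (rule tilraw_dep) (use assms in auto)
  show ?thesis using a b by (auto simp: interp_def til_def split: sum.splits)
qed

lemma gam_dep:
  assumes ws: "ws \<in> lists V" and ab: "\<And>i. 1 \<le> i \<Longrightarrow> i \<le> m \<Longrightarrow> \<alpha> i = \<alpha>' i \<and> \<beta> i = \<beta>' i"
    and w: "length w = Suc m"
  shows "gam \<alpha> \<beta> ws w = gam \<alpha>' \<beta>' ws w"
  using ws w
proof (induction ws arbitrary: w rule: lists.induct)
  case (Cons l ws)
  have IH: "gam \<alpha> \<beta> ws w = gam \<alpha>' \<beta>' ws w" using Cons by blast
  have len: "length (gam \<alpha> \<beta> ws w) = Suc m" using gam_len[OF Cons(2)] Cons(4) by simp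
  have "gam \<alpha> \<beta> (l # ws) w = interp \<alpha> \<beta> l (gam \<alpha> \<beta> ws w)" by simp
  also have "\<dots> = interp \<alpha>' \<beta>' l (gam \<alpha> \<beta> ws w)"
    by (rule interp_dep[where m=m and \<alpha>=\<alpha> and \<alpha>'=\<alpha>' and \<beta>=\<beta> and \<beta>'=\<beta>', OF ab len])
  also have "\<dots> = gam \<alpha>' \<beta>' (l # ws) w" unfolding IH by simp
  finally show ?case .
qed simp

lemma gampow_dep:
  assumes ws: "ws \<in> lists V" and ab: "\<And>i. 1 \<le> i \<Longrightarrow> i \<le> m \<Longrightarrow> \<alpha> i = \<alpha>' i \<and> \<beta> i = \<beta>' i"
    and w: "length w = Suc m"
  shows "(gam \<alpha> \<beta> ws ^^ t) w = (gam \<alpha>' \<beta>' ws ^^ t) w \<and> length ((gam \<alpha> \<beta> ws ^^ t) w) = Suc m"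
proof (induction t)
  case (Suc t)
  have e1: "(gam \<alpha> \<beta> ws ^^ Suc t) w = gam \<alpha> \<beta> ws ((gam \<alpha> \<beta> ws ^^ t) w)" by simp
  have e2: "(gam \<alpha>' \<beta>' ws ^^ Suc t) w = gam \<alpha>' \<beta>' ws ((gam \<alpha>' \<beta>' ws ^^ t) w)" by simp
  have l: "length ((gam \<alpha> \<beta> ws ^^ t) w) = Suc m" using Suc by blast
  have "gam \<alpha> \<beta> ws ((gam \<alpha> \<beta> ws ^^ t) w) = gam \<alpha>' \<beta>' ws ((gam \<alpha> \<beta> ws ^^ t) w)"
    by (rule gam_dep[where \<alpha>=\<alpha> and \<alpha>'=\<alpha>' and \<beta>=\<beta> and \<beta>'=\<beta>' and m=m, OF ws ab l])
  also have "\<dots> = gam \<alpha>' \<beta>' ws ((gam \<alpha>' \<beta>' ws ^^ t) w)" using Suc[THEN conjunct1] by (rule arg_cong)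
  finally have eq: "gam \<alpha> \<beta> ws ((gam \<alpha> \<beta> ws ^^ t) w) = gam \<alpha>' \<beta>' ws ((gam \<alpha>' \<beta>' ws ^^ t) w)" .
  have len: "length (gam \<alpha> \<beta> ws ((gam \<alpha> \<beta> ws ^^ t) w)) = Suc m" using gam_len[OF ws] l by simp
  show ?case unfolding e1 e2 by (rule conjI[OF eq len])
qed (use w in simp)

lemma Bad_dep:
  assumes ws: "ws \<in> lists V" and ab: "\<And>i. 1 \<le> i \<Longrightarrow> i \<le> m \<Longrightarrow> \<alpha> i = \<alpha>' i \<and> \<beta> i = \<beta>' i"
  shows "Bad (Suc m) \<alpha> \<beta> ws = Bad (Suc m) \<alpha>' \<beta>' ws"
proof -
  have k1: "gam \<alpha> \<beta> (drop i ws) w = gam \<alpha>' \<beta>' (drop i ws) w" if "length w = Suc m" for i w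
    by (rule gam_dep[where \<alpha>=\<alpha> and \<alpha>'=\<alpha>' and \<beta>=\<beta> and \<beta>'=\<beta>' and m=m, OF V_drop[OF ws] ab that])
  have k2: "gam \<alpha> \<beta> (drop i ws) ((gam \<alpha> \<beta> ws ^^ t) w) = gam \<alpha>' \<beta>' (drop i ws) ((gam \<alpha>' \<beta>' ws ^^ t) w)"
    if "length w = Suc m" for i w t
  proof -
    have "(gam \<alpha> \<beta> ws ^^ t) w = (gam \<alpha>' \<beta>' ws ^^ t) w" "length ((gam \<alpha> \<beta> ws ^^ t) w) = Suc m"
      using gampow_dep[where \<alpha>=\<alpha> and \<alpha>'=\<alpha>' and \<beta>=\<beta> and \<beta>'=\<beta>' and m=m and t=t, OF ws ab that] by auto
    thus ?thesis using k1 by metis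
  qed
  show ?thesis unfolding Bad_def
  proof (rule Collect_cong)
    fix x
    show "(\<exists>i<length ws. \<exists>i'<length ws. \<exists>w t. wordT X 1 w \<and> length w = Suc m \<and>
     gam \<alpha> \<beta> (drop (Suc i) ws) w = osq ox 1 (Suc m) \<and>
     gam \<alpha> \<beta> (drop (Suc i') ws) ((gam \<alpha> \<beta> ws ^^ t) w) = osq ox 1 (Suc m - 1) @ [x]) =
      (\<exists>i<length ws. \<exists>i'<length ws. \<exists>w t. wordT X 1 w \<and> length w = Suc m \<and>
     gam \<alpha>' \<beta>' (drop (Suc i) ws) w = osq ox 1 (Suc m) \<and>
     gam \<alpha>' \<beta>' (drop (Suc i') ws) ((gam \<alpha>' \<beta>' ws ^^ t) w) = osq ox 1 (Suc m - 1) @ [x])"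
      using k1 k2 by metis
  qed
qed

lemma countable_V:
  assumes fgQ: "\<exists>S. finite S \<and> S \<subseteq> carrier Q \<and> generate Q S = carrier Q"
    and fgG: "\<exists>S. finite S \<and> S \<subseteq> carrier G \<and> generate G S = carrier G"
  shows "countable V"
proof -
  obtain SQ where SQ: "finite SQ" "SQ \<subseteq> carrier Q" "generate Q SQ = carrier Q" using fgQ by blast
  obtain SG where SG: "finite SG" "SG \<subseteq> carrier G" "generate G SG = carrier G" using fgG by blast
  have cQ: "countable (carrier Q)" using countable_generate[OF grpQ SQ(2) countable_finite[OF SQ(1)]] SQ(3) by simp
  have cG: "countable (carrier G)" using countable_generate[OF grpG SG(2) countable_finite[OF SG(1)]] SG(3) by simp
  have cA: "countable (A 1)" using finA[of 1] by (simp add: countable_finite)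
  show ?thesis unfolding V_def using cQ cG cA by auto
qed

lemma construct:
  fixes Y Y' :: "nat \<Rightarrow> 'x set" and F :: "nat set"
  assumes fgQ: "\<exists>S. finite S \<and> S \<subseteq> carrier Q \<and> generate Q S = carrier Q"
    and fgG: "\<exists>S. finite S \<and> S \<subseteq> carrier G \<and> generate G S = carrier G"
    and Ysub: "\<And>i. i \<ge> 1 \<Longrightarrow> Y i \<subseteq> X i - {ox i} \<and> Y' i \<subseteq> X i - {ox i}"
    and Yne: "\<And>i. i \<ge> 1 \<Longrightarrow> Y i \<noteq> {} \<and> Y' i \<noteq> {}"
    and Ydisj: "\<And>i. i \<ge> 1 \<Longrightarrow> Y i \<inter> Y' i = {}"
    and growth: "\<And>n::nat. \<exists>j\<ge>1. card (Y j) * card (Y' j)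
                   > n * maxord X actQ actG Q G j * (card (Y j) + card (Y' j))"
    and finF: "finite F"
    and a0: "\<alpha>0 \<in> (\<Pi>\<^sub>E i\<in>{1..}. Y i)" and b0: "\<beta>0 \<in> (\<Pi>\<^sub>E i\<in>{1..}. Y' i)"
  shows "\<exists>\<alpha> \<beta>. \<alpha> \<in> (\<Pi>\<^sub>E i\<in>{1..}. Y i) \<and> \<beta> \<in> (\<Pi>\<^sub>E i\<in>{1..}. Y' i) \<and>
      (\<forall>i\<in>F. \<alpha> i = \<alpha>0 i \<and> \<beta> i = \<beta>0 i) \<and> shrinking X actQ actG Q G ox \<alpha> \<beta>"
proof -
  have finY: "finite (Y i)" "finite (Y' i)" if "i \<ge> 1" for i
    using finite_subset[OF _ finX[OF that]] Ysub[OF that] by auto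
  have cL: "countable (lists V)" using countable_V[OF fgQ fgG] by simp
  have neL: "lists V \<noteq> {}" by auto
  define e where "e = from_nat_into (lists V)"
  have e_range: "range e = lists V" unfolding e_def by (rule range_from_nat_into[OF neL cL])
  have eV: "e i \<in> lists V" for i using e_range by blast
  define C where "C n = (\<Sum>i<n. length (e i) * length (e i) + 1)" for n
  have Cn: "n \<le> C n" for n
  proof -
    have "(\<Sum>i<n. (1::nat)) \<le> C n" unfolding C_def by (rule sum_mono) simp
    thus ?thesis by simp
  qed
  have Cmono: "C n \<le> C n'" if "n \<le> n'" for n n'
    unfolding C_def by (rule sum_mono2) (use that in auto)
  define good where "good k n \<longleftrightarrow> C n * maxord X actQ actG Q G k < card (Y k) \<and> C n * maxord X actQ actG Q G k < card (Y' k)" for k n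
  define okp where "okp k a b p \<longleftrightarrow> fst p \<in> Y k \<and> snd p \<in> Y' k \<and>
      (\<forall>n. good k n \<longrightarrow> (\<forall>i<n. fst p \<notin> Bad k a b (e i) \<and> snd p \<notin> Bad k a b (e i)))" for k a b p
  have ex: "\<exists>p. okp (Suc m) a b p" for m a b
  proof -
    let ?k = "Suc m"
    have k1: "?k \<ge> 1" by simp
    have mk: "maxord X actQ actG Q G ?k \<ge> 1" by (rule maxord_ge1[OF k1])
    define N where "N = {n. good ?k n}"
    have Nsub: "N \<subseteq> {..card (Y ?k)}"
    proof
      fix n assume "n \<in> N"
      hence "C n * maxord X actQ actG Q G ?k < card (Y ?k)" unfolding N_def good_def by simp
      moreover have "n \<le> C n * maxord X actQ actG Q G ?k" using Cn[of n] mk by (metis mult.right_neutral mult_le_mono order_trans)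
      ultimately show "n \<in> {..card (Y ?k)}" by simp
    qed
    have finN: "finite N" using finite_subset[OF Nsub] by simp
    show ?thesis
    proof (cases "N = {}")
      case True
      obtain x y where "x \<in> Y ?k" "y \<in> Y' ?k" using Yne[OF k1] by blast
      thus ?thesis using True unfolding okp_def N_def by (intro exI[of _ "(x, y)"]) auto
    next
      case False
      define n0 where "n0 = Max N"
      have n0N: "n0 \<in> N" unfolding n0_def using finN False by (rule Max_in)
      have n0max: "n \<le> n0" if "good ?k n" for n unfolding n0_def using finN that by (intro Max_ge) (auto simp: N_def)
      define U where "U = (\<Union>i<n0. Bad ?k a b (e i))"
      have Usub: "U \<subseteq> X ?k" unfolding U_def using Bad_sub[OF eV] by blast
      have finU: "finite U" using finite_subset[OF Usub finX[OF k1]] .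
      have "card U \<le> (\<Sum>i<n0. card (Bad ?k a b (e i)))" unfolding U_def by (rule card_UN_le) simp
      also have "\<dots> \<le> (\<Sum>i<n0. length (e i) * length (e i) * maxord X actQ actG Q G ?k)"
        by (rule sum_mono) (rule Bad_card[OF eV])
      also have "\<dots> \<le> (\<Sum>i<n0. (length (e i) * length (e i) + 1) * maxord X actQ actG Q G ?k)"
        by (rule sum_mono) simp
      also have "\<dots> = C n0 * maxord X actQ actG Q G ?k" unfolding C_def by (simp add: sum_distrib_right)
      finally have cU: "card U \<le> C n0 * maxord X actQ actG Q G ?k" .
      have g0: "good ?k n0" using n0N by (simp add: N_def)
      have "\<not> Y ?k \<subseteq> U"
      proof
        assume "Y ?k \<subseteq> U"
        hence "card (Y ?k) \<le> card U" by (rule card_mono[OF finU])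
        thus False using cU g0 unfolding good_def by linarith
      qed
      then obtain x where x: "x \<in> Y ?k" "x \<notin> U" by blast
      have "\<not> Y' ?k \<subseteq> U"
      proof
        assume "Y' ?k \<subseteq> U"
        hence "card (Y' ?k) \<le> card U" by (rule card_mono[OF finU])
        thus False using cU g0 unfolding good_def by linarith
      qed
      then obtain y where y: "y \<in> Y' ?k" "y \<notin> U" by blast
      have "okp ?k a b (x, y)" unfolding okp_def
      proof (intro conjI allI impI)
        fix n i assume "good ?k n" "i < n"
        hence "i < n0" using n0max by (meson less_le_trans)
        thus "fst (x, y) \<notin> Bad ?k a b (e i)" "snd (x, y) \<notin> Bad ?k a b (e i)" using x y unfolding U_def by auto
      qed (use x y in auto)
      thus ?thesis by blast
    qed
  qed
  define pick where "pick k a b = (if k \<in> F then (\<alpha>0 k, \<beta>0 k) else (SOME p. okp k a b p))" for k a b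
  have pick_prop: "fst (pick (Suc m) a b) \<in> Y (Suc m) \<and> snd (pick (Suc m) a b) \<in> Y' (Suc m)" for m a b
  proof (cases "Suc m \<in> F")
    case True thus ?thesis using a0 b0 by (auto simp: pick_def PiE_iff)
  next
    case False
    have "okp (Suc m) a b (pick (Suc m) a b)" using False someI_ex[OF ex[of m a b]] by (simp add: pick_def)
    thus ?thesis unfolding okp_def by simp
  qed
  define P where "P = rec_nat (\<alpha>0, \<beta>0) (\<lambda>k ab. ((fst ab)(Suc k := fst (pick (Suc k) (fst ab) (snd ab))),
                                              (snd ab)(Suc k := snd (pick (Suc k) (fst ab) (snd ab)))))"
  have P0: "P 0 = (\<alpha>0, \<beta>0)" by (simp add: P_def)
  have PS: "P (Suc k) = ((fst (P k))(Suc k := fst (pick (Suc k) (fst (P k)) (snd (P k)))),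
                         (snd (P k))(Suc k := snd (pick (Suc k) (fst (P k)) (snd (P k)))))" for k
    by (simp add: P_def)
  define \<alpha> where "\<alpha> i = fst (P i) i" for i
  define \<beta> where "\<beta> i = snd (P i) i" for i
  have agree: "fst (P k) i = \<alpha> i \<and> snd (P k) i = \<beta> i" if "i \<le> k" for i k
    using that
  proof (induction k)
    case 0 thus ?case by (simp add: \<alpha>_def \<beta>_def)
  next
    case (Suc k)
    show ?case
    proof (cases "i = Suc k")
      case True thus ?thesis by (simp add: \<alpha>_def \<beta>_def)
    next
      case False
      hence "i \<le> k" using Suc.prems by simp
      thus ?thesis using Suc.IH False by (simp add: PS)
    qed
  qed
  have aS: "\<alpha> (Suc m) = fst (pick (Suc m) (fst (P m)) (snd (P m)))" for m by (simp add: \<alpha>_def PS)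
  have bS: "\<beta> (Suc m) = snd (pick (Suc m) (fst (P m)) (snd (P m)))" for m by (simp add: \<beta>_def PS)
  have a00: "\<alpha> 0 = \<alpha>0 0" "\<beta> 0 = \<beta>0 0" by (simp_all add: \<alpha>_def \<beta>_def P0)
  have aY: "\<alpha> i \<in> Y i \<and> \<beta> i \<in> Y' i" if i1: "i \<ge> 1" for i
  proof -
    obtain m where "i = Suc m" using i1 by (cases i) auto
    thus ?thesis using pick_prop aS bS by simp
  qed
  have aF: "\<alpha> i = \<alpha>0 i \<and> \<beta> i = \<beta>0 i" if "i \<in> F" for i
  proof (cases i)
    case 0 thus ?thesis using a00 by simp
  next
    case (Suc m) thus ?thesis using that aS bS by (simp add: pick_def)
  qed
  have aPi: "\<alpha> \<in> (\<Pi>\<^sub>E i\<in>{1..}. Y i)" and bPi: "\<beta> \<in> (\<Pi>\<^sub>E i\<in>{1..}. Y' i)"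
  proof -
    have "\<alpha>0 0 = undefined" "\<beta>0 0 = undefined" using a0 b0 by (auto simp: PiE_iff extensional_def)
    hence "\<alpha> i = undefined \<and> \<beta> i = undefined" if i0: "i \<notin> {1..}" for i
    proof -
      have "i = 0" using i0 by simp
      thus ?thesis using a00 \<open>\<alpha>0 0 = undefined\<close> \<open>\<beta>0 0 = undefined\<close> by simp
    qed
    thus "\<alpha> \<in> (\<Pi>\<^sub>E i\<in>{1..}. Y i)" "\<beta> \<in> (\<Pi>\<^sub>E i\<in>{1..}. Y' i)" using aY by (auto simp: PiE_iff extensional_def)
  qed
  have ab: "\<alpha> i \<noteq> \<beta> i" if "i \<ge> 1" for i using aY[OF that] Ydisj[OF that] by auto
  have sh: "shrinking X actQ actG Q G ox \<alpha> \<beta>"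
    unfolding shrinking_def
  proof (intro conjI allI impI ballI)
    show "inS X ox \<alpha>" "inS X ox \<beta>" unfolding inS_def using aY Ysub by blast+
    show "\<And>j. j \<ge> 1 \<Longrightarrow> \<alpha> j \<noteq> \<beta> j" by (rule ab)
  next
    fix \<gamma> assume "\<gamma> \<in> Gam X actQ actG Q G ox \<alpha> \<beta> 1"
    then obtain ws where ws: "ws \<in> lists V" "\<gamma> = gam \<alpha> \<beta> ws" using Gam_words by blast
    obtain i0 where i0: "e i0 = ws" using e_range ws(1) by (metis rangeE)
    define K where "K = C (Suc i0) * Suc (\<Sum>j\<in>F. card (Y j))"
    obtain j where j1: "j \<ge> 1" and jg: "card (Y j) * card (Y' j) > K * maxord X actQ actG Q G j * (card (Y j) + card (Y' j))"
      using growth[of K] by blast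
    define c where "c = K * maxord X actQ actG Q G j"
    have cY: "c < card (Y j)"
    proof (rule ccontr)
      assume "\<not> c < card (Y j)"
      hence "card (Y j) * card (Y' j) \<le> c * card (Y' j)" by simp
      also have "\<dots> \<le> c * (card (Y j) + card (Y' j))" by simp
      finally show False using jg unfolding c_def by simp
    qed
    have cY': "c < card (Y' j)"
    proof (rule ccontr)
      assume "\<not> c < card (Y' j)"
      hence "card (Y j) * card (Y' j) \<le> card (Y j) * c" by simp
      also have "\<dots> \<le> c * (card (Y j) + card (Y' j))" by (simp add: algebra_simps)
      finally show False using jg unfolding c_def by simp
    qed
    have mj: "maxord X actQ actG Q G j \<ge> 1" by (rule maxord_ge1[OF j1])
    have C1: "C (Suc i0) \<ge> 1" using Cn[of "Suc i0"] by simp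
    have CK: "C (Suc i0) \<le> K" unfolding K_def by simp
    have gj: "good j (Suc i0)"
    proof -
      have "C (Suc i0) * maxord X actQ actG Q G j \<le> c" unfolding c_def using CK by simp
      thus ?thesis unfolding good_def using cY cY' by linarith
    qed
    have jF: "j \<notin> F"
    proof
      assume "j \<in> F"
      hence "card (Y j) \<le> (\<Sum>j\<in>F. card (Y j))" by (rule member_le_sum) (use finF in auto)
      also have "\<dots> < Suc (\<Sum>j\<in>F. card (Y j))" by simp
      also have "\<dots> \<le> K" unfolding K_def using mult_le_mono1[OF C1, of "Suc (\<Sum>j\<in>F. card (Y j))"] by simp
      also have "\<dots> \<le> c" unfolding c_def using mj by simp
      finally show False using cY by simp
    qed
    obtain m where jm: "j = Suc m" using j1 by (cases j) auto
    have pj: "okp j (fst (P m)) (snd (P m)) (pick j (fst (P m)) (snd (P m)))"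
      using jF someI_ex[OF ex[of m "fst (P m)" "snd (P m)"]] jm by (simp add: pick_def)
    have nb0: "\<alpha> j \<notin> Bad j (fst (P m)) (snd (P m)) ws \<and> \<beta> j \<notin> Bad j (fst (P m)) (snd (P m)) ws"
      using pj gj i0 aS[of m] bS[of m] jm unfolding okp_def by auto
    have bd: "Bad (Suc m) (fst (P m)) (snd (P m)) ws = Bad (Suc m) \<alpha> \<beta> ws"
      by (rule Bad_dep[OF ws(1)]) (use agree in auto)
    have na: "\<alpha> (Suc m) \<notin> Bad (Suc m) \<alpha> \<beta> ws" and nb: "\<beta> (Suc m) \<notin> Bad (Suc m) \<alpha> \<beta> ws"
      using nb0 bd jm by auto
    show "\<exists>k\<ge>1. \<forall>x. wordT X 1 x \<and> length x = k \<longrightarrow>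
         stsect X 1 \<gamma> x \<in> Btil X actQ actG Q G ox \<alpha> \<beta> (k + 1) \<union> embA X (k + 1) ` Agrp X actQ actG Q G (k + 1)"
    proof (intro exI[of _ j] conjI allI impI)
      show "j \<ge> 1" by fact
      fix x assume x: "wordT X 1 x \<and> length x = j"
      have "stsect X 1 (gam \<alpha> \<beta> ws) x \<in> Btil X actQ actG Q G ox \<alpha> \<beta> (Suc (Suc m)) \<union> embA X (Suc (Suc m)) ` A (Suc (Suc m))"
        using nice[OF ws(1) _ _ na nb ab] x jm by simp
      thus "stsect X 1 \<gamma> x \<in> Btil X actQ actG Q G ox \<alpha> \<beta> (j + 1) \<union> embA X (j + 1) ` Agrp X actQ actG Q G (j + 1)"
        using ws(2) jm by simp
    qed
  qed
  show ?thesis using aPi bPi aF sh by blast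
qed

end


theorem proposition2p5:
  fixes Q :: "('q, 'c) monoid_scheme" and G :: "('g, 'd) monoid_scheme"
    and X :: "nat \<Rightarrow> 'x set" and ox :: "nat \<Rightarrow> 'x"
    and actQ :: "nat \<Rightarrow> 'q \<Rightarrow> 'x \<Rightarrow> 'x" and actG :: "nat \<Rightarrow> 'g \<Rightarrow> 'x \<Rightarrow> 'x"
    and Y Y' :: "nat \<Rightarrow> 'x set"
  assumes grpQ: "group Q" and grpG: "group G"
    and fgQ: "\<exists>S. finite S \<and> S \<subseteq> carrier Q \<and> generate Q S = carrier Q"
    and fgG: "\<exists>S. finite S \<and> S \<subseteq> carrier G \<and> generate G S = carrier G"
    and perfect: "derived Q (carrier Q) = carrier Q"
    and finX: "\<And>n. n \<ge> 1 \<Longrightarrow> finite (X n) \<and> card (X n) \<ge> 2"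
    and actionQ: "\<And>n. n \<ge> 1 \<Longrightarrow> group_action Q (X n) (actQ n)"
    and actionG: "\<And>n. n \<ge> 1 \<Longrightarrow> group_action G (X n) (actG n)"
    and trans: "\<And>n x y. n \<ge> 1 \<Longrightarrow> x \<in> X n \<Longrightarrow> y \<in> X n \<Longrightarrow>
                  \<exists>a \<in> Agrp X actQ actG Q G n. a x = y"
    and conjgen: "\<And>n. n \<ge> 1 \<Longrightarrow> Agrp X actQ actG Q G n =
         generate (BijGroup (X n))
           {actG n g \<otimes>\<^bsub>BijGroup (X n)\<^esub> actQ n q \<otimes>\<^bsub>BijGroup (X n)\<^esub> inv\<^bsub>BijGroup (X n)\<^esub> (actG n g)
             | g q. g \<in> carrier G \<and> q \<in> carrier Q}"
    and o_in: "\<And>i. i \<ge> 1 \<Longrightarrow> ox i \<in> X i"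
    and Ysub: "\<And>i. i \<ge> 1 \<Longrightarrow> Y i \<subseteq> X i - {ox i} \<and> Y' i \<subseteq> X i - {ox i}"
    and Yne: "\<And>i. i \<ge> 1 \<Longrightarrow> Y i \<noteq> {} \<and> Y' i \<noteq> {}"
    and Ydisj: "\<And>i. i \<ge> 1 \<Longrightarrow> Y i \<inter> Y' i = {}"
    and growth: "\<And>n::nat. \<exists>j\<ge>1. card (Y j) * card (Y' j)
                   > n * maxord X actQ actG Q G j * (card (Y j) + card (Y' j))"
  shows "(prod_topology (product_topology (\<lambda>i. discrete_topology (Y i)) {1..})
                        (product_topology (\<lambda>i. discrete_topology (Y' i)) {1..}))
           closure_of
           {p \<in> topspace (prod_topology (product_topology (\<lambda>i. discrete_topology (Y i)) {1..})
                                        (product_topology (\<lambda>i. discrete_topology (Y' i)) {1..})).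
              shrinking X actQ actG Q G ox (fst p) (snd p)}
         = topspace (prod_topology (product_topology (\<lambda>i. discrete_topology (Y i)) {1..})
                                   (product_topology (\<lambda>i. discrete_topology (Y' i)) {1..}))"
  proof -
  interpret S: setting Q G X ox actQ actG
    unfolding setting_def using grpQ grpG finX actionQ actionG o_in by blast
  let ?T1 = "product_topology (\<lambda>i. discrete_topology (Y i)) {1..}"
  let ?T2 = "product_topology (\<lambda>i. discrete_topology (Y' i)) {1..}"
  let ?T = "prod_topology ?T1 ?T2"
  let ?Sh = "{p \<in> topspace ?T. shrinking X actQ actG Q G ox (fst p) (snd p)}"
  have "topspace ?T \<subseteq> ?T closure_of ?Sh"
  proof
    fix z assume z: "z \<in> topspace ?T"
    obtain \<alpha>0 \<beta>0 where zab: "z = (\<alpha>0, \<beta>0)" by (cases z)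
    have a0: "\<alpha>0 \<in> (\<Pi>\<^sub>E i\<in>{1..}. Y i)" and b0: "\<beta>0 \<in> (\<Pi>\<^sub>E i\<in>{1..}. Y' i)"
      using z zab by auto
    show "z \<in> ?T closure_of ?Sh"
      unfolding in_closure_of
    proof (intro conjI allI impI)
      show "z \<in> topspace ?T" by (rule z)
      fix U assume zU: "z \<in> U \<and> openin ?T U"
      then obtain U1 U2 where U12: "openin ?T1 U1" "openin ?T2 U2" "\<alpha>0 \<in> U1" "\<beta>0 \<in> U2" "U1 \<times> U2 \<subseteq> U"
        using zab openin_prod_topology_alt[of ?T1 ?T2 U] by blast
      obtain W1 where W1: "\<alpha>0 \<in> (\<Pi>\<^sub>E i\<in>{1..}. W1 i)" "\<And>i. openin (discrete_topology (Y i)) (W1 i)"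
        "finite {i. W1 i \<noteq> topspace (discrete_topology (Y i))}" "(\<Pi>\<^sub>E i\<in>{1..}. W1 i) \<subseteq> U1"
        using product_topology_open_contains_basis[OF U12(1) U12(3)] by blast
      obtain W2 where W2: "\<beta>0 \<in> (\<Pi>\<^sub>E i\<in>{1..}. W2 i)" "\<And>i. openin (discrete_topology (Y' i)) (W2 i)"
        "finite {i. W2 i \<noteq> topspace (discrete_topology (Y' i))}" "(\<Pi>\<^sub>E i\<in>{1..}. W2 i) \<subseteq> U2"
        using product_topology_open_contains_basis[OF U12(2) U12(4)] by blast
      define F where "F = {i. W1 i \<noteq> Y i} \<union> {i. W2 i \<noteq> Y' i}"
      have finF: "finite F" using W1(3) W2(3) unfolding F_def by simp
      obtain \<alpha> \<beta> where ab: "\<alpha> \<in> (\<Pi>\<^sub>E i\<in>{1..}. Y i)" "\<beta> \<in> (\<Pi>\<^sub>E i\<in>{1..}. Y' i)"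
        "\<forall>i\<in>F. \<alpha> i = \<alpha>0 i \<and> \<beta> i = \<beta>0 i" "shrinking X actQ actG Q G ox \<alpha> \<beta>"
        using S.construct[OF fgQ fgG Ysub Yne Ydisj growth finF a0 b0] by blast
      have aW: "\<alpha> \<in> (\<Pi>\<^sub>E i\<in>{1..}. W1 i)"
      proof -
        have "\<alpha> i \<in> W1 i" if "i \<in> {1..}" for i
        proof (cases "i \<in> F")
          case True thus ?thesis using ab(3) W1(1) that by (auto simp: PiE_iff)
        next
          case False hence "W1 i = Y i" unfolding F_def by simp
          thus ?thesis using ab(1) that by (auto simp: PiE_iff)
        qed
        thus ?thesis using ab(1) by (auto simp: PiE_iff)
      qed
      have bW: "\<beta> \<in> (\<Pi>\<^sub>E i\<in>{1..}. W2 i)"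
      proof -
        have "\<beta> i \<in> W2 i" if "i \<in> {1..}" for i
        proof (cases "i \<in> F")
          case True thus ?thesis using ab(3) W2(1) that by (auto simp: PiE_iff)
        next
          case False hence "W2 i = Y' i" unfolding F_def by simp
          thus ?thesis using ab(2) that by (auto simp: PiE_iff)
        qed
        thus ?thesis using ab(2) by (auto simp: PiE_iff)
      qed
      have "(\<alpha>, \<beta>) \<in> U" using aW bW W1(4) W2(4) U12(5) by blast
      moreover have "(\<alpha>, \<beta>) \<in> ?Sh" using ab(1,2,4) by simp
      ultimately show "\<exists>y. y \<in> ?Sh \<and> y \<in> U" by blast
    qed
  qed
  thus ?thesis using closure_of_subset_topspace[of ?T ?Sh] by blast
qed

end
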